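(* Let $n \ge 4$, $1 \le k < \ell \le n-2$, and let $\alpha$ be the composition of length $n-1$ with entry $2$ in positions $1$, $k+1$ and $\ell+1$ and entry $1$ in all other positions. Then for every prime $p$, \begin{align*} g_\alpha(p) &= p^{3n -k-\ell-9} + (n-\ell-1) (p-1) (p+1)p^{2n -k-7} +(n-k-1)(p-1) p^{2n-\ell-6} - (n-\ell-1)p^{n-4}(p-1) \\ &\quad +(n-k-2)(n-\ell-1) (p-1)^2p^{n-4} + \left((n-\ell-2) + \binom{n-\ell-2}{2}\right)(p-1)(p-2)(p-3)p^{n-4}. \end{align*}
   Context: For a composition $\alpha=(e_1,\ldots,e_{n-1})$ (positive integers), $g_\alpha(p)$ is the number of $n\times n$ irreducible subring matrices with diagonal $(p^{e_1},\ldots,p^{e_{n-1}},1)$: upper triangular integer matrices $A$ with $A_{rr}=p^{e_r}$ ($r<n$), $A_{nn}=1$, last column $(1,\ldots,1)^T$, entries $A_{rs}=p\,a_{rs}$ for $1\le r<s\le n-1$ with integers $0\le p\,a_{rs}<p^{e_r}$, such that for all columns $v_i,v_j$ of $A$ the componentwise product $v_i\circ v_j$ lies in the $\mathbb{Z}$-column span of $A$. Binomial coefficients $\binom{m}{2}$ with $m<2$ are $0$. *)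

theory Defs
  imports Main "HOL-Computational_Algebra.Primes"
begin

text \<open>Matrices are indexed 0-based by {0..<n}, represented as functions
  nat \<Rightarrow> nat \<Rightarrow> int which vanish outside the n\<times>n block.
  A composition (e_1,...,e_{n-1}) is a list e of length n-1 (0-based: e!r = e_{r+1}).\<close>

definition irreducible_subring_matrices :: "nat \<Rightarrow> nat list \<Rightarrow> (nat \<Rightarrow> nat \<Rightarrow> int) set" where
  "irreducible_subring_matrices p e =
    (let n = length e + 1 in
     {A. (\<forall>r s. (n \<le> r \<or> n \<le> s) \<longrightarrow> A r s = 0)
       \<and> (\<forall>r<n. \<forall>s<r. A r s = 0)
       \<and> (\<forall>r<n - 1. A r r = int p ^ (e ! r))
       \<and> A (n - 1) (n - 1) = 1
       \<and> (\<forall>r<n. A r (n - 1) = 1)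
       \<and> (\<forall>r s. r < s \<and> s < n - 1 \<longrightarrow>
             (\<exists>a::int. A r s = int p * a) \<and> 0 \<le> A r s \<and> A r s < int p ^ (e ! r))
       \<and> (\<forall>i<n. \<forall>j<n. \<exists>c :: nat \<Rightarrow> int.
             \<forall>r<n. A r i * A r j = (\<Sum>t<n. c t * A r t)) })"

definition g_count :: "nat list \<Rightarrow> nat \<Rightarrow> nat" where
  "g_count e p = card (irreducible_subring_matrices p e)"

definition alpha_comp :: "nat \<Rightarrow> nat \<Rightarrow> nat \<Rightarrow> nat list" where
  "alpha_comp n k l = map (\<lambda>i. if i = 0 \<or> i = k \<or> i = l then 2 else 1) [0..<n - 1]"

end

theory Submission
  imports Defs "HOL-Computational_Algebra.Primes"
begin

definition Fun0 :: "int \<Rightarrow> nat set \<Rightarrow> (nat \<Rightarrow> int) set" where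
  "Fun0 P D = {f. (\<forall>i\<in>D. 0 \<le> f i \<and> f i < P) \<and> (\<forall>i. i \<notin> D \<longrightarrow> f i = 0)}"

definition pt :: "nat \<Rightarrow> int \<Rightarrow> nat \<Rightarrow> int" where
  "pt i v = (\<lambda>t. if t = i then v else 0)"

lemma Fun0_empty: "Fun0 P {} = {\<lambda>_. 0}"
  unfolding Fun0_def by auto

lemma Fun0_insert:
  assumes "a \<notin> D"
  shows "Fun0 P (insert a D) = (\<lambda>(v,f). f(a:=v)) ` ({0..<P} \<times> Fun0 P D)"
proof (rule set_eqI, rule iffI)
  fix f assume f: "f \<in> Fun0 P (insert a D)"
  have "f = (f(a:=0))(a := f a)" by simp
  moreover have "f(a:=0) \<in> Fun0 P D" using f assms unfolding Fun0_def by auto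
  moreover have "f a \<in> {0..<P}" using f unfolding Fun0_def by auto
  ultimately show "f \<in> (\<lambda>(v,f). f(a:=v)) ` ({0..<P} \<times> Fun0 P D)"
    by (intro image_eqI[where x="(f a, f(a:=0))"]) auto
next
  fix f assume "f \<in> (\<lambda>(v,f). f(a:=v)) ` ({0..<P} \<times> Fun0 P D)"
  then show "f \<in> Fun0 P (insert a D)" unfolding Fun0_def by auto
qed

lemma inj_Fun0_insert:
  assumes "a \<notin> D"
  shows "inj_on (\<lambda>(v,f). f(a:=v)) ({0..<P} \<times> Fun0 P D)"
proof (rule inj_onI)
  fix x y assume hx: "x \<in> {0..<P} \<times> Fun0 P D" and hy: "y \<in> {0..<P} \<times> Fun0 P D"
    and eq: "(\<lambda>(v,f). f(a:=v)) x = (\<lambda>(v,f). f(a:=v)) y"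
  obtain v f where x: "x = (v,f)" by force
  obtain v' f' where y: "y = (v',f')" by force
  have h: "v \<in> {0..<P}" "f \<in> Fun0 P D" "v' \<in> {0..<P}" "f' \<in> Fun0 P D"
     "f(a := v) = f'(a := v')" using hx hy eq x y by auto
  have "v = v'" using fun_cong[OF h(5), of a] by simp
  moreover have "f = f'"
  proof
    fix t show "f t = f' t"
    proof (cases "t = a")
      case True thus ?thesis using h(2,4) assms unfolding Fun0_def by auto
    next
      case False thus ?thesis using fun_cong[OF h(5), of t] by simp
    qed
  qed
  ultimately show "x = y" using x y by simp
qed

lemma card_Fun0:
  assumes "finite D" "0 \<le> P"
  shows "finite (Fun0 P D) \<and> card (Fun0 P D) = nat P ^ card D"
  using assms(1)
proof (induction D rule: finite_induct)
  case empty show ?case by (simp add: Fun0_empty)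
next
  case (insert a D)
  have fin: "finite ({0..<P} \<times> Fun0 P D)" using insert by auto
  have "card (Fun0 P (insert a D)) = card ({0..<P} \<times> Fun0 P D)"
    unfolding Fun0_insert[OF insert(2)] by (rule card_image[OF inj_Fun0_insert[OF insert(2)]])
  also have "\<dots> = nat P * nat P ^ card D" using insert by (simp add: card_cartesian_product)
  finally show ?case using insert fin Fun0_insert[OF insert(2)] by simp
qed

lemma finite_Fun0: "finite D \<Longrightarrow> 0 \<le> P \<Longrightarrow> finite (Fun0 P D)"
  using card_Fun0 by blast

lemma card_Fun0': "finite D \<Longrightarrow> 0 \<le> P \<Longrightarrow> card (Fun0 P D) = nat P ^ card D"
  using card_Fun0 by blast

locale pr =
  fixes P :: int
  assumes P: "prime P"
begin

lemma P2: "P \<ge> 2" using P prime_ge_2_int by blast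

lemma pm: "P dvd a * b \<longleftrightarrow> P dvd a \<or> P dvd b"
  using P prime_dvd_mult_iff by blast

lemma dz: "0 \<le> a \<Longrightarrow> a < P \<Longrightarrow> P dvd a \<Longrightarrow> a = 0"
  using zdvd_not_zless[of a P] by (cases "a = 0") auto

lemma deq: "0 \<le> a \<Longrightarrow> a < P \<Longrightarrow> 0 \<le> b \<Longrightarrow> b < P \<Longrightarrow> P dvd a - b \<Longrightarrow> a = b"
proof -
  assume h: "0 \<le> a" "a < P" "0 \<le> b" "b < P" "P dvd a - b"
  show "a = b"
  proof (cases "a \<ge> b")
    case True thus ?thesis using dz[of "a-b"] h by auto
  next
    case False
    have "P dvd b - a" using h(5) by (metis dvd_minus_iff minus_diff_eq)
    thus ?thesis using dz[of "b-a"] h False by auto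
  qed
qed

lemma d01: "0 \<le> a \<Longrightarrow> a < P \<Longrightarrow> P dvd a * a - a \<Longrightarrow> a = 0 \<or> a = 1"
proof -
  assume h: "0 \<le> a" "a < P" "P dvd a * a - a"
  have "a * a - a = a * (a - 1)" by (simp add: algebra_simps)
  hence "P dvd a \<or> P dvd a - 1" using h(3) pm by simp
  thus ?thesis using deq[of a 1] dz[of a] h P2 by auto
qed

lemma dlin: "P dvd A \<Longrightarrow> P dvd B \<Longrightarrow> X = c * A + d * B \<Longrightarrow> P dvd X"
  by simp

lemma PL1:
  fixes g d y z y' z' :: int
  assumes g: "\<not> P dvd g" and d: "\<not> P dvd d"
    and E1: "P dvd g*(y*y - y) + d*(z*z - z)"
    and E2: "P dvd g*(y'*y' - y') + d*(z'*z' - z')"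
    and E3: "P dvd g*(y*y') + d*(z*z')"
    and det: "\<not> P dvd (y*z' - z*y')"
  shows "P dvd (1 - y - y') \<and> P dvd (1 - z - z')"
proof -
  have a1: "P dvd g*y*(1-y-y') + d*z*(1-z-z')"
    by (rule dlin[OF E1 E3, of _ "-1" "-1"]) (simp add: algebra_simps)
  have a2: "P dvd g*y'*(1-y-y') + d*z'*(1-z-z')"
    by (rule dlin[OF E2 E3, of _ "-1" "-1"]) (simp add: algebra_simps)
  have "P dvd g*(1-y-y')*(y*z' - z*y')"
    by (rule dlin[OF a1 a2, of _ "z'" "-z"]) (simp add: algebra_simps)
  hence r: "P dvd (1-y-y')" using g det pm by blast
  have "P dvd d*(1-z-z')*(y*z' - z*y')"
    by (rule dlin[OF a1 a2, of _ "-y'" "y"]) (simp add: algebra_simps)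
  hence s: "P dvd (1-z-z')" using d det pm by blast
  show ?thesis using r s by simp
qed

lemma iso:
  fixes g d y z y' z' :: int
  assumes g: "\<not> P dvd g" and d: "\<not> P dvd d"
    and E1: "P dvd g*(y*y - y) + d*(z*z - z)"
    and E3: "P dvd g*(y*y') + d*(z*z')"
    and det: "P dvd (y*z' - z*y')"
    and nz1: "\<not> (P dvd y \<and> P dvd z)" and nz2: "\<not> (P dvd y' \<and> P dvd z')"
  shows "P dvd g + d \<and> P dvd y - z"
proof -
  have b1: "P dvd y' * (g*y*y + d*z*z)"
    by (rule dlin[OF E3 det, of _ y "-d*z"]) (simp add: algebra_simps)
  have b2: "P dvd z' * (g*y*y + d*z*z)"
    by (rule dlin[OF E3 det, of _ z "g*y"]) (simp add: algebra_simps)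
  have B: "P dvd g*y*y + d*z*z" using b1 b2 nz2 pm by blast
  have L: "P dvd g*y + d*z"
    by (rule dlin[OF B E1, of _ 1 "-1"]) (simp add: algebra_simps)
  have "P dvd d*z*(z-y)"
    by (rule dlin[OF B L, of _ 1 "-y"]) (simp add: algebra_simps)
  hence "P dvd z \<or> P dvd z - y" using d pm by blast
  moreover have "\<not> P dvd z"
  proof
    assume "P dvd z"
    hence "P dvd g*y" using L by (metis dvd_add_left_iff dvd_mult2 mult.commute)
    hence "P dvd y" using g pm by blast
    thus False using nz1 \<open>P dvd z\<close> by blast
  qed
  ultimately have zy: "P dvd z - y" by blast
  have "P dvd (g+d)*y"
    by (rule dlin[OF L zy, of _ 1 "-d"]) (simp add: algebra_simps)
  moreover have "\<not> P dvd y" using zy nz1 by (metis dvd_diff_commute dvd_add_right_iff diff_add_cancel)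
  ultimately have "P dvd g + d" using pm by blast
  moreover have "P dvd y - z" using zy by (metis dvd_minus_iff minus_diff_eq)
  ultimately show ?thesis by simp
qed

end

definition Z01 :: "nat set \<Rightarrow> (nat \<Rightarrow> int) set" where
  "Z01 D = insert (\<lambda>_. 0) ((\<lambda>i. pt i 1) ` D)"

definition cQ :: "int \<Rightarrow> int \<Rightarrow> int \<Rightarrow> nat set \<Rightarrow> (nat \<Rightarrow> int) \<Rightarrow> (nat \<Rightarrow> int) \<Rightarrow> bool" where
  "cQ P g d S y z = (\<forall>i\<in>S. \<forall>j\<in>S. P dvd g*(y i*y j - (if i=j then y i else 0)) + d*(z i*z j - (if i=j then z i else 0)))"

definition pt2 :: "nat \<Rightarrow> int \<Rightarrow> nat \<Rightarrow> int \<Rightarrow> nat \<Rightarrow> int" where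
  "pt2 i a j b = (\<lambda>t. if t = i then a else if t = j then b else 0)"

lemma pt0: "pt i 0 = (\<lambda>_. 0)" unfolding pt_def by auto

lemma Fun0_range: "f \<in> Fun0 P D \<Longrightarrow> i \<in> D \<Longrightarrow> 0 \<le> f i \<and> f i < P"
  unfolding Fun0_def by auto
lemma Fun0_out: "f \<in> Fun0 P D \<Longrightarrow> i \<notin> D \<Longrightarrow> f i = 0"
  unfolding Fun0_def by auto
lemma Fun0_mono: "f \<in> Fun0 P D \<Longrightarrow> D \<subseteq> E \<Longrightarrow> 0 < P \<Longrightarrow> f \<in> Fun0 P E"
  unfolding Fun0_def by auto

context pr begin

definition Gs :: "(int \<times> int) set" where
  "Gs = {(a,b). 2 \<le> a \<and> a < P \<and> 2 \<le> b \<and> b < P \<and> a \<noteq> b}"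

definition Zc where "Zc S U = Z01 S \<times> Z01 U"
definition Fc where "Fc U = (\<lambda>t. (t,t)) ` Fun0 P U"
definition Sc where "Sc U = (\<lambda>(i,(a,b)). (pt i a, pt i b)) ` (U \<times> Gs)"
definition Pc where "Pc U = (\<lambda>((i,j),(a,b)). (pt2 i a j (P+1-a), pt2 i b j (P+1-b)))
      ` ({(i,j). i\<in>U \<and> j\<in>U \<and> i<j} \<times> Gs)"

lemma comp_val:
  assumes "0 \<le> a" "a < P" "0 \<le> a'" "a' < P" "P dvd 1 - a - a'" "2 \<le> a"
  shows "a' = P + 1 - a"
proof -
  have "P dvd a' - (P + 1 - a)"
    by (rule dlin[OF assms(5) dvd_refl, of _ "-1" "-1"]) (simp add: algebra_simps)
  thus ?thesis using deq[of a' "P+1-a"] assms by auto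
qed

lemma comp_val01:
  assumes "0 \<le> a'" "a' < P" "P dvd 1 - a - a'" "a = 0 \<or> a = 1"
  shows "a' = 1 - a"
proof -
  have "P dvd a' - (1 - a)"
    by (rule dlin[OF assms(3) assms(3), of _ "-1" "0"]) (simp add: algebra_simps)
  thus ?thesis using deq[of a' "1-a"] assms P2 by auto
qed

lemma classify:
  assumes S: "finite S" and US: "U \<subseteq> S"
    and y: "y \<in> Fun0 P S" and z: "z \<in> Fun0 P U"
    and g: "\<not> P dvd g" and d: "\<not> P dvd d"
    and Q: "cQ P g d S y z"
  shows "(y,z) \<in> Zc S U \<union> Fc U \<union> Sc U \<union> Pc U"
proof -
  have zS: "z \<in> Fun0 P S" using Fun0_mono[OF z US] P2 by simp
  have ry: "\<And>i. i\<in>S \<Longrightarrow> 0 \<le> y i \<and> y i < P" using Fun0_range[OF y] by blast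
  have rz: "\<And>i. i\<in>S \<Longrightarrow> 0 \<le> z i \<and> z i < P" using Fun0_range[OF zS] by blast
  have oy: "\<And>i. i\<notin>S \<Longrightarrow> y i = 0" using Fun0_out[OF y] by blast
  have oz: "\<And>i. i\<notin>S \<Longrightarrow> z i = 0" using Fun0_out[OF zS] by blast
  have self: "P dvd g*(y i*y i - y i) + d*(z i*z i - z i)" if "i\<in>S" for i
  proof -
    have "P dvd g*(y i*y i - (if i=i then y i else 0)) + d*(z i*z i - (if i=i then z i else 0))"
      using Q that unfolding cQ_def by blast
    thus ?thesis by simp
  qed
  have cross: "P dvd g*(y i*y j) + d*(z i*z j)" if "i\<in>S" "j\<in>S" "i\<noteq>j" for i j
  proof -
    have "P dvd g*(y i*y j - (if i=j then y i else 0)) + d*(z i*z j - (if i=j then z i else 0))"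
      using Q that unfolding cQ_def by blast
    thus ?thesis using that by simp
  qed
  define NZ where "NZ i \<longleftrightarrow> i \<in> S \<and> (y i \<noteq> 0 \<or> z i \<noteq> 0)" for i
  have nzd: "\<And>i. NZ i \<Longrightarrow> \<not> (P dvd y i \<and> P dvd z i)"
  proof -
    fix i assume "NZ i"
    hence "i \<in> S" "y i \<noteq> 0 \<or> z i \<noteq> 0" unfolding NZ_def by auto
    thus "\<not> (P dvd y i \<and> P dvd z i)" using dz[of "y i"] dz[of "z i"] ry rz by auto
  qed
  show ?thesis
  proof (cases "P dvd g + d \<and> (\<forall>i\<in>S. y i = z i)")
    case True
    have "y = z"
    proof
      fix t show "y t = z t" using True oy[of t] oz[of t] by (cases "t \<in> S") auto
    qed
    hence "(y,z) \<in> Fc U" unfolding Fc_def using z by auto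
    thus ?thesis by blast
  next
    case C2: False
    have eqv: "\<And>i. i \<in> S \<Longrightarrow> P dvd y i - z i \<Longrightarrow> y i = z i"
      using deq ry rz by simp
    have pairc: "\<not> P dvd (y i*z j - z i*y j)" if ij: "i\<in>S" "j\<in>S" "i\<noteq>j" "NZ i" "NZ j" for i j
    proof
      assume det: "P dvd (y i*z j - z i*y j)"
      have "P dvd g + d \<and> P dvd y i - z i"
        by (rule iso[OF g d self[OF ij(1)] cross[OF ij(1,2,3)] det nzd[OF ij(4)] nzd[OF ij(5)]])
      hence gd: "P dvd g + d" and yi: "y i = z i" using eqv ij by auto
      obtain m where m: "m \<in> S" "y m \<noteq> z m" using C2 gd by blast
      have mi: "m \<noteq> i" using m yi by auto
      have nzm: "NZ m" using m unfolding NZ_def by auto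
      show False
      proof (cases "P dvd (y m*z i - z m*y i)")
        case True
        have "P dvd g + d \<and> P dvd y m - z m"
          by (rule iso[OF g d self[OF m(1)] cross[OF m(1) ij(1) mi] True nzd[OF nzm] nzd[OF ij(4)]])
        thus False using eqv m by blast
      next
        case False
        have "P dvd (1 - y m - y i) \<and> P dvd (1 - z m - z i)"
          by (rule PL1[OF g d self[OF m(1)] self[OF ij(1)] cross[OF m(1) ij(1) mi] False])
        hence "P dvd y m - z m"
          using dlin[of "1 - z m - z i" "1 - y m - y i" "y m - z m" 1 "-1"] yi by (simp add: algebra_simps)
        thus False using eqv m by blast
      qed
    qed
    have pairs: "P dvd (1 - y i - y j) \<and> P dvd (1 - z i - z j)"
      if ij: "i\<in>S" "j\<in>S" "i\<noteq>j" "NZ i" "NZ j" for i j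
      by (rule PL1[OF g d self[OF ij(1)] self[OF ij(2)] cross[OF ij(1,2,3)] pairc[OF ij]])
    have nothree: False if ij: "NZ i" "NZ j" "NZ m" "i\<noteq>j" "i\<noteq>m" "j\<noteq>m" for i j m
    proof -
      have S3: "i\<in>S" "j\<in>S" "m\<in>S" using ij unfolding NZ_def by auto
      have a: "P dvd (1 - y i - y j) \<and> P dvd (1 - z i - z j)" using pairs[OF S3(1,2) ij(4) ij(1,2)] .
      have b: "P dvd (1 - y i - y m) \<and> P dvd (1 - z i - z m)" using pairs[OF S3(1,3) ij(5) ij(1,3)] .
      have c1: "P dvd y m - y j"
        by (rule dlin[OF conjunct1[OF a] conjunct1[OF b], of _ 1 "-1"]) (simp add: algebra_simps)
      have c2: "P dvd z m - z j"
        by (rule dlin[OF conjunct2[OF a] conjunct2[OF b], of _ 1 "-1"]) (simp add: algebra_simps)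
      have "P dvd y j*z m - z j*y m"
        by (rule dlin[OF c2 c1, of _ "y j" "- z j"]) (simp add: algebra_simps)
      thus False using pairc S3 ij by blast
    qed
    have zero_out: "y t = 0 \<and> z t = 0" if "\<not> NZ t" for t
      using that oy oz unfolding NZ_def by auto
    have ab01: "z i = 0 \<or> z i = 1" if "i \<in> S" "y i = 0 \<or> y i = 1" for i
    proof -
      have "P dvd d*(z i*z i - z i)" using self[OF that(1)] that(2) by auto
      hence "P dvd z i*z i - z i" using d pm by blast
      thus ?thesis using d01 rz[OF that(1)] by blast
    qed
    have ba01: "y i = 0 \<or> y i = 1" if "i \<in> S" "z i = 0 \<or> z i = 1" for i
    proof -
      have "P dvd g*(y i*y i - y i)" using self[OF that(1)] that(2) by auto
      hence "P dvd y i*y i - y i" using g pm by blast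
      thus ?thesis using d01 ry[OF that(1)] by blast
    qed
    have aneb: "y i \<noteq> z i" if "i \<in> S" "y i \<ge> 2" "y i = z i \<Longrightarrow> \<forall>t\<in>S. y t = z t" for i
    proof
      assume e: "y i = z i"
      have "P dvd (g+d)*(y i*y i - y i)" using self[OF that(1)] e by (simp add: algebra_simps)
      moreover have "\<not> P dvd y i*y i - y i" using d01 ry[OF that(1)] that(2) by fastforce
      ultimately have "P dvd g + d" using pm by blast
      moreover have "\<forall>t\<in>S. y t = z t" using that(3) e by simp
      ultimately show False using C2 by blast
    qed
    have inU: "i \<in> U" if "z i \<noteq> 0" for i using Fun0_out[OF z] that by blast
    have inS: "i \<in> S" if "NZ i" for i using that unfolding NZ_def by auto
    show ?thesis
    proof (cases "\<exists>i j. NZ i \<and> NZ j \<and> i < j")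
      case True
      then obtain i j where ij: "NZ i" "NZ j" "i < j" by blast
      have only: "t = i \<or> t = j" if "NZ t" for t using nothree[OF ij(1,2) that] ij(3) by fastforce
      have Si: "i \<in> S" and Sj: "j \<in> S" using ij inS by auto
      have pr: "P dvd (1 - y i - y j) \<and> P dvd (1 - z i - z j)" using pairs[OF Si Sj _ ij(1,2)] ij(3) by simp
      have yeq: "y = pt2 i (y i) j (y j)"
      proof
        fix t show "y t = pt2 i (y i) j (y j) t" using zero_out[of t] only[of t] unfolding pt2_def by auto
      qed
      have zeq: "z = pt2 i (z i) j (z j)"
      proof
        fix t show "z t = pt2 i (z i) j (z j) t" using zero_out[of t] only[of t] unfolding pt2_def by auto
      qed
      show ?thesis
      proof (cases "y i = 0 \<or> y i = 1")
        case True
        have b01: "z i = 0 \<or> z i = 1" using ab01[OF Si True] .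
        have a': "y j = 1 - y i" using comp_val01[of "y j" "y i"] ry[OF Sj] conjunct1[OF pr] True by simp
        have b': "z j = 1 - z i" using comp_val01[of "z j" "z i"] rz[OF Sj] conjunct2[OF pr] b01 by simp
        have c: "(y i = 1 \<and> z i = 0) \<or> (y i = 0 \<and> z i = 1)"
          using True b01 a' b' ij(1,2) unfolding NZ_def by auto
        have "i \<noteq> j" using ij by simp
        show ?thesis
        proof (cases "y i = 1 \<and> z i = 0")
          case True
          have "pt2 i (y i) j (y j) = pt i 1" using True a' by (auto simp: pt2_def pt_def fun_eq_iff)
          hence "y = pt i 1" using yeq by simp
          moreover have "pt2 i (z i) j (z j) = pt j 1" using True b' \<open>i\<noteq>j\<close> by (auto simp: pt2_def pt_def fun_eq_iff)
          hence "z = pt j 1" using zeq by simp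
          moreover have "j \<in> U" using inU[of j] b' True by simp
          ultimately have "(y,z) \<in> Zc S U" unfolding Zc_def Z01_def using Si by auto
          thus ?thesis by blast
        next
          case False
          hence F: "y i = 0 \<and> z i = 1" using c by blast
          have "pt2 i (y i) j (y j) = pt j 1" using F a' \<open>i\<noteq>j\<close> by (auto simp: pt2_def pt_def fun_eq_iff)
          hence "y = pt j 1" using yeq by simp
          moreover have "pt2 i (z i) j (z j) = pt i 1" using F b' by (auto simp: pt2_def pt_def fun_eq_iff)
          hence "z = pt i 1" using zeq by simp
          moreover have "i \<in> U" using inU[of i] F by simp
          ultimately have "(y,z) \<in> Zc S U" unfolding Zc_def Z01_def using Sj by auto
          thus ?thesis by blast
        qed
      next
        case False
        have a2: "y i \<ge> 2" using False ry[OF Si] by auto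
        have b2: "z i \<ge> 2" using ba01[OF Si] False rz[OF Si] by fastforce
        have a': "y j = P + 1 - y i" using comp_val[of "y i" "y j"] ry[OF Si] ry[OF Sj] conjunct1[OF pr] a2 by simp
        have b': "z j = P + 1 - z i" using comp_val[of "z i" "z j"] rz[OF Si] rz[OF Sj] conjunct2[OF pr] b2 by simp
        have ne: "y i \<noteq> z i"
        proof (rule aneb[OF Si a2], intro ballI)
          fix t assume e: "y i = z i" and "t \<in> S"
          show "y t = z t" using zero_out[of t] only[of t] a' b' e by (cases "NZ t") auto
        qed
        have iU: "i \<in> U" using inU[of i] b2 by simp
        have jU: "j \<in> U" using inU[of j] b' rz[OF Si] by simp
        have G: "(y i, z i) \<in> Gs" unfolding Gs_def using a2 b2 ry[OF Si] rz[OF Si] ne by auto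
        have "(y,z) = (\<lambda>((i,j),(a,b)). (pt2 i a j (P+1-a), pt2 i b j (P+1-b))) ((i,j),(y i, z i))"
          using yeq zeq a' b' by simp
        moreover have "((i,j),(y i, z i)) \<in> {(i,j). i\<in>U \<and> j\<in>U \<and> i<j} \<times> Gs" using iU jU ij(3) G by simp
        ultimately have "(y,z) \<in> Pc U" unfolding Pc_def by (rule image_eqI)
        thus ?thesis by blast
      qed
    next
      case False
      hence only1: "NZ i \<Longrightarrow> NZ j \<Longrightarrow> i = j" for i j by (metis linorder_neqE_nat)
      show ?thesis
      proof (cases "\<exists>i. NZ i")
        case False
        hence "y = (\<lambda>_. 0)" "z = (\<lambda>_. 0)" using zero_out by auto
        hence "(y,z) \<in> Zc S U" unfolding Zc_def Z01_def by auto
        thus ?thesis by blast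
      next
        case True
        then obtain i where i: "NZ i" by blast
        have Si: "i \<in> S" using inS[OF i] .
        have yeq: "y = pt i (y i)"
        proof
          fix t show "y t = pt i (y i) t" using zero_out[of t] only1[OF i, of t] unfolding pt_def by (cases "NZ t") auto
        qed
        have zeq: "z = pt i (z i)"
        proof
          fix t show "z t = pt i (z i) t" using zero_out[of t] only1[OF i, of t] unfolding pt_def by (cases "NZ t") auto
        qed
        show ?thesis
        proof (cases "y i = 0 \<or> y i = 1")
          case True
          have b01: "z i = 0 \<or> z i = 1" using ab01[OF Si True] .
          have "y \<in> Z01 S"
          proof (cases "y i = 0")
            case True thus ?thesis using yeq pt0 unfolding Z01_def by simp
          next
            case False thus ?thesis using yeq Si \<open>y i = 0 \<or> y i = 1\<close> unfolding Z01_def by simp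
          qed
          moreover have "z \<in> Z01 U"
          proof (cases "z i = 0")
            case True thus ?thesis using zeq pt0 unfolding Z01_def by simp
          next
            case False thus ?thesis using zeq inU[of i] b01 unfolding Z01_def by simp
          qed
          ultimately show ?thesis unfolding Zc_def by blast
        next
          case False
          have a2: "y i \<ge> 2" using False ry[OF Si] by auto
          have b2: "z i \<ge> 2" using ba01[OF Si] False rz[OF Si] by fastforce
          have ne: "y i \<noteq> z i"
          proof (rule aneb[OF Si a2], intro ballI)
            fix t assume e: "y i = z i" and "t \<in> S"
            show "y t = z t" using zero_out[of t] only1[OF i, of t] e by (cases "NZ t") auto
          qed
          have iU: "i \<in> U" using inU[of i] b2 by simp
          have G: "(y i, z i) \<in> Gs" unfolding Gs_def using a2 b2 ry[OF Si] rz[OF Si] ne by auto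
          have "(y,z) = (\<lambda>(i,(a,b)). (pt i a, pt i b)) (i,(y i, z i))" using yeq zeq by simp
          moreover have "(i,(y i, z i)) \<in> U \<times> Gs" using iU G by simp
          ultimately have "(y,z) \<in> Sc U" unfolding Sc_def by (rule image_eqI)
          thus ?thesis by blast
        qed
      qed
    qed
  qed
qed

end

lemma Z01_prod: "f \<in> Z01 D \<Longrightarrow> f i * f j - (if i = j then f i else 0) = 0"
  unfolding Z01_def pt_def by auto

lemma Z01_mono: "U \<subseteq> S \<Longrightarrow> Z01 U \<subseteq> Z01 S"
  unfolding Z01_def by auto

lemma Z01_Fun0: "2 \<le> P \<Longrightarrow> Z01 D \<subseteq> Fun0 P D"
  unfolding Z01_def Fun0_def pt_def by auto

lemma card_Z01: "finite D \<Longrightarrow> card (Z01 D) = card D + 1"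
proof -
  assume fin: "finite D"
  have inj: "inj_on (\<lambda>i. pt i 1) D"
    by (rule inj_onI) (metis pt_def zero_neq_one)
  have "(\<lambda>_. 0) \<notin> (\<lambda>i. pt i 1) ` D"
  proof
    assume "(\<lambda>_. 0) \<in> (\<lambda>i. pt i 1) ` D"
    then obtain i where "(\<lambda>_. 0::int) = pt i 1" by blast
    hence "(0::int) = pt i 1 i" by metis
    thus False unfolding pt_def by simp
  qed
  thus ?thesis unfolding Z01_def using card_image[OF inj] fin by simp
qed

context pr begin

lemma Z01_char:
  assumes f: "f \<in> Fun0 P D"
    and h: "\<forall>i\<in>D. \<forall>j\<in>D. P dvd f i * f j - (if i = j then f i else 0)"
  shows "f \<in> Z01 D"
proof -
  have r: "\<And>i. i\<in>D \<Longrightarrow> 0 \<le> f i \<and> f i < P" using Fun0_range[OF f] by blast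
  have o: "\<And>i. i\<notin>D \<Longrightarrow> f i = 0" using Fun0_out[OF f] by blast
  have v01: "f i = 0 \<or> f i = 1" if "i \<in> D" for i
  proof -
    have "P dvd f i * f i - (if i = i then f i else 0)" using h that by blast
    thus ?thesis using d01 r[OF that] by simp
  qed
  show ?thesis
  proof (cases "\<exists>i\<in>D. f i = 1")
    case True
    then obtain i where i: "i \<in> D" "f i = 1" by blast
    have "f t = pt i 1 t" for t
    proof (cases "t \<in> D")
      case True
      show ?thesis
      proof (cases "t = i")
        case False
        have "P dvd f i * f t - (if i = t then f i else 0)" using h i True by blast
        hence "P dvd f t" using i False by simp
        thus ?thesis using dz r[OF True] False unfolding pt_def by auto
      qed (simp add: i pt_def)
    next
      case False thus ?thesis using o i unfolding pt_def by auto
    qed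
    hence "f = pt i 1" by auto
    thus ?thesis unfolding Z01_def using i by auto
  next
    case False
    hence "f = (\<lambda>_. 0)" using v01 o by (metis ext)
    thus ?thesis unfolding Z01_def by auto
  qed
qed

lemma mod_dvd: "P dvd (x mod P) - x"
proof -
  have "x mod P - x = P * (- (x div P))" by (simp add: minus_div_mult_eq_mod[symmetric] algebra_simps)
  thus ?thesis by simp
qed

lemma cnt_lin:
  assumes u: "\<not> P dvd u" and v: "\<not> P dvd v"
  shows "card {(g,d). g \<in> {1..<P} \<and> d \<in> {1..<P} \<and> P dvd g*u + d*v} = nat (P - 1)"
proof -
  have "coprime P v" using v P prime_imp_coprime by blast
  hence "gcd v P = 1" by (simp add: coprime_iff_gcd_eq_1 gcd.commute)
  then obtain a b where ab: "a * v + b * P = 1" using bezout_int[of v P] by metis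
  have w: "P dvd v*a - 1"
  proof -
    have "v*a - 1 = P * (-b)" using ab by (simp add: algebra_simps)
    thus ?thesis by simp
  qed
  define f where "f g = (-(g*u*a)) mod P" for g
  have fval: "P dvd g*u + f g * v" for g
    by (rule dlin[OF mod_dvd[of "-(g*u*a)"] w, of _ v "-(g*u)"]) (simp add: f_def algebra_simps)
  have eq: "{(g,d). g \<in> {1..<P} \<and> d \<in> {1..<P} \<and> P dvd g*u + d*v} = (\<lambda>g. (g, f g)) ` {1..<P}"
  proof (rule set_eqI, rule iffI)
    fix x assume "x \<in> {(g,d). g \<in> {1..<P} \<and> d \<in> {1..<P} \<and> P dvd g*u + d*v}"
    then obtain g d where x: "x = (g,d)" "g \<in> {1..<P}" "d \<in> {1..<P}" "P dvd g*u + d*v" by blast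
    have "P dvd (d - f g) * v"
      by (rule dlin[OF x(4) fval[of g], of _ 1 "-1"]) (simp add: algebra_simps)
    hence "P dvd d - f g" using v pm by blast
    moreover have "0 \<le> f g" "f g < P" unfolding f_def using P2 by auto
    ultimately have "d = f g" using deq[of d "f g"] x(3) by auto
    thus "x \<in> (\<lambda>g. (g, f g)) ` {1..<P}" using x by auto
  next
    fix x assume "x \<in> (\<lambda>g. (g, f g)) ` {1..<P}"
    then obtain g where x: "x = (g, f g)" "g \<in> {1..<P}" by blast
    have r: "0 \<le> f g" "f g < P" unfolding f_def using P2 by auto
    have "f g \<noteq> 0"
    proof
      assume "f g = 0"
      hence "P dvd g * u" using fval[of g] by simp
      hence "P dvd g" using u pm by blast
      thus False using dz[of g] x(2) by auto
    qed
    thus "x \<in> {(g,d). g \<in> {1..<P} \<and> d \<in> {1..<P} \<and> P dvd g*u + d*v}" using x r fval[of g] by auto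
  qed
  have "inj_on (\<lambda>g. (g, f g)) {1..<P}" by (rule inj_onI) simp
  hence "card ((\<lambda>g. (g, f g)) ` {1..<P}) = card {1..<P}" by (rule card_image)
  thus ?thesis using eq by simp
qed

end

context pr begin

lemma nd: "2 \<le> a \<Longrightarrow> a < P \<Longrightarrow> \<not> P dvd a*a - a"
  using d01[of a] by auto

lemma Zc_cQ: "(y,z) \<in> Zc S U \<Longrightarrow> cQ P g d S y z"
  unfolding cQ_def Zc_def using Z01_prod[of y] Z01_prod[of z] by auto

lemma Sc_cQ:
  assumes "i \<in> S"
  shows "cQ P g d S (pt i a) (pt i b) \<longleftrightarrow> P dvd g*(a*a - a) + d*(b*b - b)"
proof
  assume "cQ P g d S (pt i a) (pt i b)"
  hence "P dvd g*(pt i a i*pt i a i - (if i=i then pt i a i else 0)) + d*(pt i b i*pt i b i - (if i=i then pt i b i else 0))"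
    unfolding cQ_def using assms by blast
  thus "P dvd g*(a*a - a) + d*(b*b - b)" by (simp add: pt_def)
next
  assume h: "P dvd g*(a*a - a) + d*(b*b - b)"
  show "cQ P g d S (pt i a) (pt i b)" unfolding cQ_def
  proof (intro ballI)
    fix i' j' assume "i' \<in> S" "j' \<in> S"
    show "P dvd g*(pt i a i'*pt i a j' - (if i'=j' then pt i a i' else 0)) + d*(pt i b i'*pt i b j' - (if i'=j' then pt i b i' else 0))"
      using h by (cases "i' = i"; cases "j' = i") (auto simp: pt_def)
  qed
qed

lemma Pc_cQ:
  assumes "i \<in> S" "j \<in> S" "i \<noteq> j"
  shows "cQ P g d S (pt2 i a j (P+1-a)) (pt2 i b j (P+1-b)) \<longleftrightarrow> P dvd g*(a*a - a) + d*(b*b - b)"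
    (is "cQ P g d S ?y ?z \<longleftrightarrow> P dvd ?E")
proof
  assume "cQ P g d S ?y ?z"
  hence "P dvd g*(?y i*?y i - (if i=i then ?y i else 0)) + d*(?z i*?z i - (if i=i then ?z i else 0))"
    unfolding cQ_def using assms by blast
  thus "P dvd ?E" by (simp add: pt2_def)
next
  assume h: "P dvd ?E"
  have jj: "P dvd g*((P+1-a)*(P+1-a) - (P+1-a)) + d*((P+1-b)*(P+1-b) - (P+1-b))"
    by (rule dlin[OF h dvd_refl, of _ 1 "g*(P-2*a+1) + d*(P-2*b+1)"]) (simp add: algebra_simps)
  have ij: "P dvd g*(a*(P+1-a)) + d*(b*(P+1-b))"
    by (rule dlin[OF h dvd_refl, of _ "-1" "g*a + d*b"]) (simp add: algebra_simps)
  have ji: "P dvd g*((P+1-a)*a) + d*((P+1-b)*b)"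
    using ij by (simp add: algebra_simps)
  show "cQ P g d S ?y ?z" unfolding cQ_def
  proof (intro ballI)
    fix i' j' assume "i' \<in> S" "j' \<in> S"
    show "P dvd g*(?y i'*?y j' - (if i'=j' then ?y i' else 0)) + d*(?z i'*?z j' - (if i'=j' then ?z i' else 0))"
      using h jj ij ji assms(3) by (cases "i' = i"; cases "j' = i"; cases "i' = j"; cases "j' = j") (auto simp: pt2_def)
  qed
qed

end

context pr begin

definition V where "V S y z = card {(g,d). g \<in> {1..<P} \<and> d \<in> {1..<P} \<and> cQ P g d S y z}"

lemma v1: "(y,z) \<in> Zc S U \<Longrightarrow> V S y z = nat (P-1) * nat (P-1)"
proof -
  assume h: "(y,z) \<in> Zc S U"
  have "{(g,d). g \<in> {1..<P} \<and> d \<in> {1..<P} \<and> cQ P g d S y z} = {1..<P} \<times> {1..<P}"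
    using Zc_cQ[OF h] by auto
  thus ?thesis unfolding V_def by (simp add: card_cartesian_product)
qed

lemma v2:
  assumes US: "U \<subseteq> S" and h: "(y,z) \<in> Fc U - Zc S U"
  shows "V S y z = nat (P-1)"
proof -
  obtain w where w: "w \<in> Fun0 P U" "y = w" "z = w" using h unfolding Fc_def by auto
  have "w \<notin> Z01 U" using h w Z01_mono[OF US] unfolding Zc_def by auto
  then obtain i j where ij: "i \<in> U" "j \<in> U" "\<not> P dvd w i * w j - (if i = j then w i else 0)"
    using Z01_char[OF w(1)] by blast
  have "{(g,d). g \<in> {1..<P} \<and> d \<in> {1..<P} \<and> cQ P g d S y z}
      = {(g,d). g \<in> {1..<P} \<and> d \<in> {1..<P} \<and> P dvd g*1 + d*1}"
  proof -
    have "cQ P g d S w w \<longleftrightarrow> P dvd g + d" for g d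
    proof
      assume "cQ P g d S w w"
      hence "P dvd g*(w i * w j - (if i = j then w i else 0)) + d*(w i * w j - (if i = j then w i else 0))"
        unfolding cQ_def using ij US by blast
      hence "P dvd (g + d) * (w i * w j - (if i = j then w i else 0))" by (simp add: algebra_simps)
      thus "P dvd g + d" using ij(3) pm by blast
    next
      assume "P dvd g + d"
      thus "cQ P g d S w w" unfolding cQ_def
        by (auto simp: distrib_right[symmetric])
    qed
    thus ?thesis using w by auto
  qed
  moreover have "\<not> P dvd 1" using P2 by (simp add: zdvd_not_zless)
  ultimately show ?thesis unfolding V_def using cnt_lin[of 1 1] by simp
qed

lemma v3:
  assumes US: "U \<subseteq> S" and h: "(y,z) \<in> Sc U"
  shows "V S y z = nat (P-1)"
proof -
  obtain i a b where w: "i \<in> U" "(a,b) \<in> Gs" "y = pt i a" "z = pt i b" using h unfolding Sc_def by auto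
  have ab: "2 \<le> a" "a < P" "2 \<le> b" "b < P" using w(2) unfolding Gs_def by auto
  have "{(g,d). g \<in> {1..<P} \<and> d \<in> {1..<P} \<and> cQ P g d S y z}
      = {(g,d). g \<in> {1..<P} \<and> d \<in> {1..<P} \<and> P dvd g*(a*a-a) + d*(b*b-b)}"
    using Sc_cQ[of i S] w US by auto
  thus ?thesis unfolding V_def using cnt_lin nd ab by simp
qed

lemma v4:
  assumes US: "U \<subseteq> S" and h: "(y,z) \<in> Pc U"
  shows "V S y z = nat (P-1)"
proof -
  obtain i j a b where w: "i \<in> U" "j \<in> U" "i < j" "(a,b) \<in> Gs" "y = pt2 i a j (P+1-a)" "z = pt2 i b j (P+1-b)"
    using h unfolding Pc_def by auto
  have ab: "2 \<le> a" "a < P" "2 \<le> b" "b < P" using w(4) unfolding Gs_def by auto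
  have "{(g,d). g \<in> {1..<P} \<and> d \<in> {1..<P} \<and> cQ P g d S y z}
      = {(g,d). g \<in> {1..<P} \<and> d \<in> {1..<P} \<and> P dvd g*(a*a-a) + d*(b*b-b)}"
  proof -
    have "i \<in> S" "j \<in> S" "i \<noteq> j" using w US by auto
    from Pc_cQ[OF this] show ?thesis using w by auto
  qed
  thus ?thesis unfolding V_def using cnt_lin nd ab by simp
qed

lemma v5:
  assumes S: "finite S" and US: "U \<subseteq> S" and y: "y \<in> Fun0 P S" and z: "z \<in> Fun0 P U"
    and h: "(y,z) \<notin> Zc S U \<union> Fc U \<union> Sc U \<union> Pc U"
  shows "V S y z = 0"
proof -
  have "{(g,d). g \<in> {1..<P} \<and> d \<in> {1..<P} \<and> cQ P g d S y z} = {}"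
  proof (rule ccontr)
    assume "{(g,d). g \<in> {1..<P} \<and> d \<in> {1..<P} \<and> cQ P g d S y z} \<noteq> {}"
    then obtain g d where gd: "g \<in> {1..<P}" "d \<in> {1..<P}" "cQ P g d S y z" by blast
    have "\<not> P dvd g" "\<not> P dvd d" using gd dz[of g] dz[of d] by auto
    thus False using classify[OF S US y z _ _ gd(3)] h by blast
  qed
  thus ?thesis unfolding V_def by (metis card.empty)
qed

end

lemma card_pairs:
  assumes "finite U"
  shows "card {(i,j). i \<in> U \<and> j \<in> U \<and> (i::nat) < j} = card U choose 2"
proof -
  let ?A = "{(i,j). i \<in> U \<and> j \<in> U \<and> (i::nat) < j}"
  have inj: "inj_on (\<lambda>(i,j). {i,j}) ?A"
  proof (rule inj_onI, clarsimp)
    fix i j i' j' :: nat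
    assume h: "i < j" "i' < j'" "{i,j} = {i',j'}"
    thus "i = i' \<and> j = j'" by (metis doubleton_eq_iff not_less_iff_gr_or_eq)
  qed
  have im: "(\<lambda>(i,j). {i,j}) ` ?A = {B. B \<subseteq> U \<and> card B = 2}"
  proof (rule set_eqI, rule iffI)
    fix B assume "B \<in> (\<lambda>(i,j). {i,j}) ` ?A"
    thus "B \<in> {B. B \<subseteq> U \<and> card B = 2}" by auto
  next
    fix B assume "B \<in> {B. B \<subseteq> U \<and> card B = 2}"
    then obtain x y where B: "B = {x,y}" "x \<noteq> y" "B \<subseteq> U" unfolding card_2_iff by auto
    show "B \<in> (\<lambda>(i,j). {i,j}) ` ?A"
    proof (cases "x < y")
      case True thus ?thesis using B by (intro image_eqI[where x="(x,y)"]) auto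
    next
      case False hence "y < x" using B by simp
      thus ?thesis using B by (intro image_eqI[where x="(y,x)"]) auto
    qed
  qed
  have "card ?A = card {B. B \<subseteq> U \<and> card B = 2}" using card_image[OF inj] im by simp
  thus ?thesis using n_subsets[OF assms] by simp
qed

context pr begin

lemma Z01_val: "f \<in> Z01 D \<Longrightarrow> f i = 0 \<or> f i = 1"
  unfolding Z01_def pt_def by auto

lemma cGs: "card Gs = nat ((P-2)*(P-3))"
proof -
  have G: "Gs = {2..<P} \<times> {2..<P} - (\<lambda>a. (a,a)) ` {2..<P}" unfolding Gs_def by auto
  have sub: "(\<lambda>a. (a,a)) ` {2..<P} \<subseteq> {2..<P} \<times> {2..<P}" by auto
  have "card ((\<lambda>a. (a,a)) ` {2..<P}) = card {2..<P}" by (rule card_image) (auto simp: inj_on_def)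
  hence "card Gs = nat (P-2) * nat (P-2) - nat (P-2)"
    unfolding G using card_Diff_subset[OF _ sub] by (simp add: card_cartesian_product)
  also have "\<dots> = nat ((P-2)*(P-3))"
  proof -
    have e: "nat (P-2) * nat (P-2) - nat (P-2) = nat (P-2) * (nat (P-2) - 1)" by (simp add: diff_mult_distrib2)
    show ?thesis
    proof (cases "P = 2")
      case True thus ?thesis by simp
    next
      case False
      hence "P \<ge> 3" using P2 by simp
      hence "nat (P-2) - 1 = nat (P-3)" by simp
      thus ?thesis using e \<open>P \<ge> 3\<close> by (simp add: nat_mult_distrib)
    qed
  qed
  finally show ?thesis .
qed

end

context pr begin

lemma fin_Z01: "finite D \<Longrightarrow> finite (Z01 D)" unfolding Z01_def by simp

lemma cZc: "finite S \<Longrightarrow> finite U \<Longrightarrow> card (Zc S U) = (card S + 1) * (card U + 1)"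
  unfolding Zc_def by (simp add: card_cartesian_product card_Z01)

lemma cFc: "finite U \<Longrightarrow> card (Fc U) = nat P ^ card U"
proof -
  assume "finite U"
  have "inj_on (\<lambda>t. (t,t)) (Fun0 P U)" by (rule inj_onI) simp
  hence "card (Fc U) = card (Fun0 P U)" unfolding Fc_def by (rule card_image)
  thus ?thesis using card_Fun0' \<open>finite U\<close> P2 by simp
qed

lemma FZ: "U \<subseteq> S \<Longrightarrow> Fc U \<inter> Zc S U = (\<lambda>t. (t,t)) ` Z01 U"
proof -
  assume US: "U \<subseteq> S"
  have "Z01 U \<subseteq> Fun0 P U" using Z01_Fun0 P2 by simp
  moreover have "Z01 U \<subseteq> Z01 S" using Z01_mono[OF US] .
  ultimately show ?thesis unfolding Fc_def Zc_def by auto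
qed

lemma cFZ: "finite U \<Longrightarrow> U \<subseteq> S \<Longrightarrow> card (Fc U \<inter> Zc S U) = card U + 1"
proof -
  assume "finite U" "U \<subseteq> S"
  have "inj_on (\<lambda>t. (t,t)) (Z01 U)" by (rule inj_onI) simp
  thus ?thesis using FZ[OF \<open>U \<subseteq> S\<close>] card_image card_Z01[OF \<open>finite U\<close>] by metis
qed

lemma cSc: "finite U \<Longrightarrow> card (Sc U) = card U * card Gs"
proof -
  assume fU: "finite U"
  have "inj_on (\<lambda>(i,(a,b)). (pt i a, pt i b)) (U \<times> Gs)"
  proof (rule inj_onI)
    fix x x' assume hx: "x \<in> U \<times> Gs" "x' \<in> U \<times> Gs"
      "(\<lambda>(i,(a,b)). (pt i a, pt i b)) x = (\<lambda>(i,(a,b)). (pt i a, pt i b)) x'"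
    obtain i a b where x: "x = (i,a,b)" by (cases x) auto
    obtain i' a' b' where x': "x' = (i',a',b')" by (cases x') auto
    have h: "(i,a,b) \<in> U \<times> Gs" "(i',a',b') \<in> U \<times> Gs" "(pt i a, pt i b) = (pt i' a', pt i' b')"
      using hx x x' by auto
    have a2: "a \<ge> 2" using h(1) unfolding Gs_def by auto
    have e: "pt i a = pt i' a'" "pt i b = pt i' b'" using h(3) by auto
    have "pt i a i = pt i' a' i" using e by simp
    hence ii: "i = i'" using a2 unfolding pt_def by (auto split: if_splits)
    have "a = a'" using fun_cong[OF e(1), of i] ii unfolding pt_def by simp
    moreover have "b = b'" using fun_cong[OF e(2), of i] ii unfolding pt_def by simp
    ultimately show "x = x'" using ii x x' by simp
  qed
  hence "card (Sc U) = card (U \<times> Gs)" unfolding Sc_def by (rule card_image)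
  thus ?thesis by (simp add: card_cartesian_product)
qed

lemma cPc: "finite U \<Longrightarrow> card (Pc U) = (card U choose 2) * card Gs"
proof -
  assume fU: "finite U"
  let ?A = "{(i,j). i \<in> U \<and> j \<in> U \<and> i < j}"
  have "inj_on (\<lambda>((i,j),(a,b)). (pt2 i a j (P+1-a), pt2 i b j (P+1-b))) (?A \<times> Gs)"
  proof (rule inj_onI)
    fix x x' assume hx: "x \<in> ?A \<times> Gs" "x' \<in> ?A \<times> Gs"
      "(\<lambda>((i,j),(a,b)). (pt2 i a j (P+1-a), pt2 i b j (P+1-b))) x = (\<lambda>((i,j),(a,b)). (pt2 i a j (P+1-a), pt2 i b j (P+1-b))) x'"
    obtain i j a b where x: "x = ((i,j),a,b)" by (cases x) auto
    obtain i' j' a' b' where x': "x' = ((i',j'),a',b')" by (cases x') auto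
    have h: "((i,j),a,b) \<in> ?A \<times> Gs" "((i',j'),a',b') \<in> ?A \<times> Gs"
      "(pt2 i a j (P+1-a), pt2 i b j (P+1-b)) = (pt2 i' a' j' (P+1-a'), pt2 i' b' j' (P+1-b'))"
      using hx x x' by auto
    have r: "a \<ge> 2" "a < P" "a' \<ge> 2" "a' < P" "i < j" "i' < j'" using h(1,2) unfolding Gs_def by auto
    have e: "pt2 i a j (P+1-a) = pt2 i' a' j' (P+1-a')" "pt2 i b j (P+1-b) = pt2 i' b' j' (P+1-b')"
      using h(3) by auto
    have ei: "pt2 i a j (P+1-a) t = pt2 i' a' j' (P+1-a') t" for t using e(1) by simp
    have "i = i' \<or> i = j'" using ei[of i] r unfolding pt2_def by (auto split: if_splits)
    moreover have "j = i' \<or> j = j'" using ei[of j] r unfolding pt2_def by (auto split: if_splits)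
    moreover have "i' = i \<or> i' = j" using ei[of i'] r unfolding pt2_def by (auto split: if_splits)
    ultimately have ii: "i = i'" and jj: "j = j'" using r by auto
    have "a = a'" using ei[of i] ii jj r unfolding pt2_def by auto
    moreover have "b = b'" using fun_cong[OF e(2), of i] ii jj r unfolding pt2_def by auto
    ultimately show "x = x'" using ii jj x x' by simp
  qed
  hence "card (Pc U) = card (?A \<times> Gs)" unfolding Pc_def by (rule card_image)
  thus ?thesis using card_pairs[OF fU] by (simp add: card_cartesian_product)
qed

end

context pr begin

lemma sub_T:
  assumes US: "U \<subseteq> S"
  shows "Zc S U \<union> Fc U \<union> Sc U \<union> Pc U \<subseteq> Fun0 P S \<times> Fun0 P U"
proof -
  have a: "Zc S U \<subseteq> Fun0 P S \<times> Fun0 P U" unfolding Zc_def using Z01_Fun0 P2 by blast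
  have b: "Fc U \<subseteq> Fun0 P S \<times> Fun0 P U" unfolding Fc_def using Fun0_mono[OF _ US] P2 by auto
  have c: "Sc U \<subseteq> Fun0 P S \<times> Fun0 P U" unfolding Sc_def Gs_def Fun0_def pt_def using US by auto
  have d: "Pc U \<subseteq> Fun0 P S \<times> Fun0 P U" unfolding Pc_def Gs_def Fun0_def pt2_def using US by auto
  show ?thesis using a b c d by blast
qed

lemma disj:
  shows "Zc S U \<inter> Sc U = {}" "Zc S U \<inter> Pc U = {}" "Fc U \<inter> Sc U = {}" "Fc U \<inter> Pc U = {}"
    "Sc U \<inter> Pc U = {}"
proof -
  show "Zc S U \<inter> Sc U = {}"
  proof (rule ccontr)
    assume "Zc S U \<inter> Sc U \<noteq> {}"
    then obtain i a b where "(pt i a, pt i b) \<in> Zc S U" "(a,b) \<in> Gs" unfolding Sc_def by auto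
    hence "pt i a i = 0 \<or> pt i a i = 1" "a \<ge> 2" using Z01_val unfolding Zc_def Gs_def by auto
    thus False unfolding pt_def by auto
  qed
  show "Zc S U \<inter> Pc U = {}"
  proof (rule ccontr)
    assume "Zc S U \<inter> Pc U \<noteq> {}"
    then obtain i j a b where "(pt2 i a j (P+1-a), pt2 i b j (P+1-b)) \<in> Zc S U" "(a,b) \<in> Gs" unfolding Pc_def by auto
    hence "pt2 i a j (P+1-a) i = 0 \<or> pt2 i a j (P+1-a) i = 1" "a \<ge> 2" using Z01_val unfolding Zc_def Gs_def by auto
    thus False unfolding pt2_def by auto
  qed
  show "Fc U \<inter> Sc U = {}"
  proof (rule ccontr)
    assume "Fc U \<inter> Sc U \<noteq> {}"
    then obtain i a b where "pt i a = pt i b" "(a,b) \<in> Gs" unfolding Sc_def Fc_def by auto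
    hence "pt i a i = pt i b i" "a \<noteq> b" unfolding Gs_def by auto
    thus False unfolding pt_def by auto
  qed
  show "Fc U \<inter> Pc U = {}"
  proof (rule ccontr)
    assume "Fc U \<inter> Pc U \<noteq> {}"
    then obtain i j a b where "pt2 i a j (P+1-a) = pt2 i b j (P+1-b)" "(a,b) \<in> Gs" unfolding Pc_def Fc_def by auto
    hence "pt2 i a j (P+1-a) i = pt2 i b j (P+1-b) i" "a \<noteq> b" unfolding Gs_def by auto
    thus False unfolding pt2_def by auto
  qed
  show "Sc U \<inter> Pc U = {}"
  proof (rule ccontr)
    assume "Sc U \<inter> Pc U \<noteq> {}"
    then obtain i0 a0 b0 i j a b where e: "pt i0 a0 = pt2 i a j (P+1-a)" "(a,b) \<in> Gs" "i < j"
      unfolding Pc_def Sc_def by auto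
    have r: "a \<ge> 2" "a < P" using e(2) unfolding Gs_def by auto
    have "pt i0 a0 i = pt2 i a j (P+1-a) i" "pt i0 a0 j = pt2 i a j (P+1-a) j" using e(1) by auto
    thus False using r e(3) unfolding pt_def pt2_def by (auto split: if_splits)
  qed
qed

lemma Hsum:
  assumes S: "finite S" and US: "U \<subseteq> S"
  shows "int (\<Sum>gd\<in>{1..<P}\<times>{1..<P}. card {t \<in> Fun0 P S \<times> Fun0 P U. cQ P (fst gd) (snd gd) S (fst t) (snd t)})
    = (P-1)^2 * (int (card S) + 1) * (int (card U) + 1)
      + (P-1) * (P ^ card U - (int (card U) + 1) + (int (card U) + int (card U choose 2)) * (P-2) * (P-3))"
proof -
  have fU: "finite U" using finite_subset[OF US S] .
  let ?T = "Fun0 P S \<times> Fun0 P U"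
  let ?UU = "{1..<P}\<times>{1..<P}"
  let ?W = "\<lambda>t. V S (fst t) (snd t)"
  have fT: "finite ?T" using finite_Fun0 S fU P2 by simp
  have fUU: "finite ?UU" by simp
  have "(\<Sum>gd\<in>?UU. card {t \<in> ?T. cQ P (fst gd) (snd gd) S (fst t) (snd t)})
     = (\<Sum>t\<in>?T. card {gd \<in> ?UU. cQ P (fst gd) (snd gd) S (fst t) (snd t)})"
    by (rule sum_multicount_gen[OF fUU fT]) simp
  also have "\<dots> = (\<Sum>t\<in>?T. ?W t)"
  proof (rule sum.cong[OF refl])
    fix t show "card {gd \<in> ?UU. cQ P (fst gd) (snd gd) S (fst t) (snd t)} = ?W t"
      unfolding V_def by (rule arg_cong[where f=card]) auto
  qed
  also have "\<dots> = (\<Sum>t\<in>Zc S U \<union> (Fc U - Zc S U) \<union> Sc U \<union> Pc U. ?W t)"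
  proof (rule sum.mono_neutral_right[OF fT])
    show "Zc S U \<union> (Fc U - Zc S U) \<union> Sc U \<union> Pc U \<subseteq> ?T" using sub_T[OF US] by blast
    show "\<forall>t\<in>?T - (Zc S U \<union> (Fc U - Zc S U) \<union> Sc U \<union> Pc U). ?W t = 0"
    proof
      fix t assume "t \<in> ?T - (Zc S U \<union> (Fc U - Zc S U) \<union> Sc U \<union> Pc U)"
      thus "?W t = 0" using v5[OF S US, of "fst t" "snd t"] by (cases t) auto
    qed
  qed
  also have "\<dots> = card (Zc S U) * (nat (P-1) * nat (P-1))
      + (card (Fc U - Zc S U) + card (Sc U) + card (Pc U)) * nat (P-1)"
  proof -
    have fZ: "finite (Zc S U)" unfolding Zc_def using fin_Z01 S fU by simp
    have fF: "finite (Fc U - Zc S U)" unfolding Fc_def using finite_Fun0 fU P2 by simp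
    have fG: "finite Gs" by (rule finite_subset[of _ "{2..<P}\<times>{2..<P}"]) (auto simp: Gs_def)
    have fS: "finite (Sc U)" unfolding Sc_def using fU fG by simp
    have fA: "finite {(i,j). i \<in> U \<and> j \<in> U \<and> i < j}"
      by (rule finite_subset[of _ "U \<times> U"]) (use fU in auto)
    have fP: "finite (Pc U)" unfolding Pc_def using fA fG by simp
    have d1: "Zc S U \<inter> (Fc U - Zc S U) = {}" by blast
    have d2: "(Zc S U \<union> (Fc U - Zc S U)) \<inter> Sc U = {}" using disj by blast
    have d3: "(Zc S U \<union> (Fc U - Zc S U) \<union> Sc U) \<inter> Pc U = {}" using disj by blast
    have "(\<Sum>t\<in>Zc S U \<union> (Fc U - Zc S U) \<union> Sc U \<union> Pc U. ?W t)
        = (\<Sum>t\<in>Zc S U. ?W t) + (\<Sum>t\<in>Fc U - Zc S U. ?W t) + (\<Sum>t\<in>Sc U. ?W t) + (\<Sum>t\<in>Pc U. ?W t)"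
    proof -
      have e3: "(\<Sum>t\<in>Zc S U \<union> (Fc U - Zc S U) \<union> Sc U \<union> Pc U. ?W t)
          = (\<Sum>t\<in>Zc S U \<union> (Fc U - Zc S U) \<union> Sc U. ?W t) + (\<Sum>t\<in>Pc U. ?W t)"
        by (rule sum.union_disjoint) (use fZ fF fS fP d3 in auto)
      have e2: "(\<Sum>t\<in>Zc S U \<union> (Fc U - Zc S U) \<union> Sc U. ?W t)
          = (\<Sum>t\<in>Zc S U \<union> (Fc U - Zc S U). ?W t) + (\<Sum>t\<in>Sc U. ?W t)"
        by (rule sum.union_disjoint) (use fZ fF fS d2 in auto)
      have e1: "(\<Sum>t\<in>Zc S U \<union> (Fc U - Zc S U). ?W t)
          = (\<Sum>t\<in>Zc S U. ?W t) + (\<Sum>t\<in>Fc U - Zc S U. ?W t)"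
        by (rule sum.union_disjoint) (use fZ fF d1 in auto)
      show ?thesis using e1 e2 e3 by simp
    qed
    also have "(\<Sum>t\<in>Zc S U. ?W t) = card (Zc S U) * (nat (P-1) * nat (P-1))"
      using v1 by (simp add: sum.cong[OF refl, of _ "\<lambda>_. nat (P-1) * nat (P-1)"])
    also have "(\<Sum>t\<in>Fc U - Zc S U. ?W t) = card (Fc U - Zc S U) * nat (P-1)"
      using v2[OF US] by (simp add: sum.cong[OF refl, of _ "\<lambda>_. nat (P-1)"])
    also have "(\<Sum>t\<in>Sc U. ?W t) = card (Sc U) * nat (P-1)"
      using v3[OF US] by (simp add: sum.cong[OF refl, of _ "\<lambda>_. nat (P-1)"])
    also have "(\<Sum>t\<in>Pc U. ?W t) = card (Pc U) * nat (P-1)"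
      using v4[OF US] by (simp add: sum.cong[OF refl, of _ "\<lambda>_. nat (P-1)"])
    finally show ?thesis by (simp add: algebra_simps)
  qed
  finally have main: "(\<Sum>gd\<in>?UU. card {t \<in> ?T. cQ P (fst gd) (snd gd) S (fst t) (snd t)}) =
     card (Zc S U) * (nat (P-1) * nat (P-1)) + (card (Fc U - Zc S U) + card (Sc U) + card (Pc U)) * nat (P-1)" .
  have fFc: "finite (Fc U)" unfolding Fc_def using finite_Fun0 fU P2 by simp
  have cFd: "card (Fc U - Zc S U) = card (Fc U) - card (Fc U \<inter> Zc S U)"
    by (rule card_Diff_subset_Int) (use fFc in simp)
  have le: "card (Fc U \<inter> Zc S U) \<le> card (Fc U)" by (rule card_mono[OF fFc]) blast
  have iFd: "int (card (Fc U - Zc S U)) = P ^ card U - (int (card U) + 1)"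
    using cFd le cFc[OF fU] cFZ[OF fU US] P2 by (simp add: of_nat_diff)
  have iG: "int (card Gs) = (P-2)*(P-3)"
  proof -
    have "(P-2)*(P-3) \<ge> 0" using P2 by (cases "P = 2") (auto intro: mult_nonneg_nonneg)
    thus ?thesis using cGs by simp
  qed
  have iP: "int (nat (P-1)) = P - 1" using P2 by simp
  have "int (card (Zc S U) * (nat (P-1) * nat (P-1)) + (card (Fc U - Zc S U) + card (Sc U) + card (Pc U)) * nat (P-1))
     = int (card (Zc S U)) * ((P-1)*(P-1)) + (int (card (Fc U - Zc S U)) + int (card (Sc U)) + int (card (Pc U))) * (P-1)"
    using iP by simp
  also have "\<dots> = ((int (card S) + 1) * (int (card U) + 1)) * ((P-1)*(P-1))
     + ((P ^ card U - (int (card U) + 1)) + int (card U) * ((P-2)*(P-3)) + int (card U choose 2) * ((P-2)*(P-3))) * (P-1)"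
  proof -
    have z1: "int (card (Zc S U)) = (int (card S) + 1) * (int (card U) + 1)" using cZc[OF S fU] by (simp add: algebra_simps)
    have s1: "int (card (Sc U)) = int (card U) * ((P-2)*(P-3))" using cSc[OF fU] iG by simp
    have p1: "int (card (Pc U)) = int (card U choose 2) * ((P-2)*(P-3))" using cPc[OF fU] iG by simp
    show ?thesis unfolding z1 s1 p1 iFd by (rule refl)
  qed
  also have "\<dots> = (P-1)^2 * (int (card S) + 1) * (int (card U) + 1)
      + (P-1) * (P ^ card U - (int (card U) + 1) + (int (card U) + int (card U choose 2)) * (P-2) * (P-3))"
    by (simp add: algebra_simps power2_eq_square)
  finally show ?thesis unfolding main .
qed

end

context pr begin

lemma cQ_g0:
  assumes g: "\<not> P dvd g" and y: "y \<in> Fun0 P S"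
  shows "cQ P g 0 S y z \<longleftrightarrow> y \<in> Z01 S"
proof
  assume "cQ P g 0 S y z"
  hence "\<forall>i\<in>S. \<forall>j\<in>S. P dvd g * (y i * y j - (if i = j then y i else 0))" unfolding cQ_def by simp
  hence "\<forall>i\<in>S. \<forall>j\<in>S. P dvd y i * y j - (if i = j then y i else 0)" using g pm by blast
  thus "y \<in> Z01 S" using Z01_char[OF y] by blast
next
  assume "y \<in> Z01 S"
  thus "cQ P g 0 S y z" unfolding cQ_def using Z01_prod[of y S] by simp
qed

lemma cQ_0d:
  assumes d: "\<not> P dvd d" and z: "z \<in> Fun0 P U" and US: "U \<subseteq> S"
  shows "cQ P 0 d S y z \<longleftrightarrow> z \<in> Z01 U"
proof
  assume "cQ P 0 d S y z"
  hence "\<forall>i\<in>U. \<forall>j\<in>U. P dvd d * (z i * z j - (if i = j then z i else 0))" unfolding cQ_def using US by (simp add: subset_iff)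
  hence "\<forall>i\<in>U. \<forall>j\<in>U. P dvd z i * z j - (if i = j then z i else 0)" using d pm by blast
  thus "z \<in> Z01 U" using Z01_char[OF z] by blast
next
  assume "z \<in> Z01 U"
  thus "cQ P 0 d S y z" unfolding cQ_def using Z01_prod[of z U] by simp
qed

lemma Q0sum:
  assumes S: "finite S" and US: "U \<subseteq> S"
  shows "int (\<Sum>gd\<in>{0..<P}\<times>{0..<P}. card {t \<in> Fun0 P S \<times> Fun0 P U. cQ P (fst gd) (snd gd) S (fst t) (snd t)})
    = P ^ card S * P ^ card U + (P-1) * (int (card S) + 1) * P ^ card U + (P-1) * P ^ card S * (int (card U) + 1)
      + (P-1)^2 * (int (card S) + 1) * (int (card U) + 1)
      + (P-1) * (P ^ card U - (int (card U) + 1) + (int (card U) + int (card U choose 2)) * (P-2) * (P-3))"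
proof -
  have fU: "finite U" using finite_subset[OF US S] .
  let ?T = "Fun0 P S \<times> Fun0 P U"
  let ?f = "\<lambda>gd. card {t \<in> ?T. cQ P (fst gd) (snd gd) S (fst t) (snd t)}"
  have split: "{0..<P}\<times>{0..<P} = {(0,0)} \<union> ({1..<P}\<times>{0}) \<union> ({0}\<times>{1..<P}) \<union> ({1..<P}\<times>{1..<P})"
    using P2 by auto
  have "sum ?f ({0..<P}\<times>{0..<P}) = ?f (0,0) + sum ?f ({1..<P}\<times>{0}) + sum ?f ({0}\<times>{1..<P}) + sum ?f ({1..<P}\<times>{1..<P})"
  proof -
    have P0: "0 < P" using P2 by simp
    show ?thesis unfolding split by (subst sum.union_disjoint; auto simp: P0)+
  qed
  also have "?f (0,0) = card ?T"
    by (rule arg_cong[where f=card]) (auto simp: cQ_def)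
  also have "card ?T = nat P ^ card S * nat P ^ card U"
    using card_Fun0' S fU P2 by (simp add: card_cartesian_product)
  also have "sum ?f ({1..<P}\<times>{0}) = nat (P-1) * ((card S + 1) * nat P ^ card U)"
  proof -
    have fg: "?f gd = (card S + 1) * nat P ^ card U" if "gd \<in> {1..<P}\<times>{0}" for gd
    proof -
      have "fst gd \<in> {1..<P}" "snd gd = 0" using that by (auto simp: mem_Times_iff)
      then obtain g where g: "gd = (g,0)" "1 \<le> g" "g < P" by (metis atLeastLessThan_iff prod.collapse)
      have ng: "\<not> P dvd g" using dz[of g] g by auto
      have "{t \<in> ?T. cQ P (fst gd) (snd gd) S (fst t) (snd t)} = Z01 S \<times> Fun0 P U"
        using cQ_g0[OF ng] Z01_Fun0[OF P2, of S] g(1) by auto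
      thus ?thesis using card_Z01[OF S] card_Fun0'[OF fU] P2 by (simp add: card_cartesian_product)
    qed
    have "sum ?f ({1..<P}\<times>{0}) = sum (\<lambda>_. (card S + 1) * nat P ^ card U) ({1..<P}\<times>{0})"
      using fg by (simp cong: sum.cong)
    thus ?thesis by (simp add: card_cartesian_product)
  qed
  also have "sum ?f ({0}\<times>{1..<P}) = nat (P-1) * (nat P ^ card S * (card U + 1))"
  proof -
    have fg: "?f gd = nat P ^ card S * (card U + 1)" if "gd \<in> {0}\<times>{1..<P}" for gd
    proof -
      have "snd gd \<in> {1..<P}" "fst gd = 0" using that by (auto simp: mem_Times_iff)
      then obtain d where d: "gd = (0,d)" "1 \<le> d" "d < P" by (metis atLeastLessThan_iff prod.collapse)
      have nd: "\<not> P dvd d" using dz[of d] d by auto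
      have "{t \<in> ?T. cQ P (fst gd) (snd gd) S (fst t) (snd t)} = Fun0 P S \<times> Z01 U"
        using cQ_0d[OF nd _ US] Z01_Fun0[OF P2, of U] d(1) by auto
      thus ?thesis using card_Z01[OF fU] card_Fun0'[OF S] P2 by (simp add: card_cartesian_product)
    qed
    have "sum ?f ({0}\<times>{1..<P}) = sum (\<lambda>_. nat P ^ card S * (card U + 1)) ({0}\<times>{1..<P})"
      using fg by (simp cong: sum.cong)
    thus ?thesis by (simp add: card_cartesian_product)
  qed
  finally have e: "sum ?f ({0..<P}\<times>{0..<P}) = nat P ^ card S * nat P ^ card U + nat (P-1) * ((card S + 1) * nat P ^ card U)
     + nat (P-1) * (nat P ^ card S * (card U + 1)) + sum ?f ({1..<P}\<times>{1..<P})" .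
  have h: "int (sum ?f ({1..<P}\<times>{1..<P})) = (P-1)^2 * (int (card S) + 1) * (int (card U) + 1)
      + (P-1) * (P ^ card U - (int (card U) + 1) + (int (card U) + int (card U choose 2)) * (P-2) * (P-3))"
    using Hsum[OF S US] .
  have iP: "int (nat (P-1)) = P - 1" "int (nat P) = P" using P2 by auto
  show ?thesis unfolding e of_nat_add of_nat_mult of_nat_power h iP of_nat_1
    by (simp add: algebra_simps power2_eq_square)
qed

end

definition CC :: "int \<Rightarrow> nat \<Rightarrow> nat \<Rightarrow> nat set \<Rightarrow> nat set \<Rightarrow> (nat \<Rightarrow> int) \<Rightarrow> (nat \<Rightarrow> int) \<Rightarrow> (nat \<Rightarrow> int) \<Rightarrow> bool" where
  "CC P k l S U x y z \<longleftrightarrow> (y l \<noteq> 0 \<and> x k = 0 \<and> z \<in> Z01 U) \<or> (y l = 0 \<and> cQ P (x k) (x l) S y z)"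

lemma cQ_cong: "(\<And>i. i \<in> S \<Longrightarrow> y i = y' i) \<Longrightarrow> cQ P g d S y z = cQ P g d S y' z"
  unfolding cQ_def by simp

context pr begin

definition Core where "Core S U = {(g,d,b,y,z). g \<in> {0..<P} \<and> d \<in> {0..<P} \<and> b \<in> {0..<P} \<and> y \<in> Fun0 P S \<and> z \<in> Fun0 P U
   \<and> ((b \<noteq> 0 \<and> g = 0 \<and> z \<in> Z01 U) \<or> (b = 0 \<and> cQ P g d S y z))}"

lemma cCore:
  assumes S: "finite S" and US: "U \<subseteq> S"
  shows "int (card (Core S U)) = P * (P-1) * P ^ card S * (int (card U) + 1) +
      (P ^ card S * P ^ card U + (P-1) * (int (card S) + 1) * P ^ card U + (P-1) * P ^ card S * (int (card U) + 1)
      + (P-1)^2 * (int (card S) + 1) * (int (card U) + 1)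
      + (P-1) * (P ^ card U - (int (card U) + 1) + (int (card U) + int (card U choose 2)) * (P-2) * (P-3)))"
proof -
  have fU: "finite U" using finite_subset[OF US S] .
  let ?T = "Fun0 P S \<times> Fun0 P U"
  let ?C1 = "(\<lambda>(d,b,y,z). (0::int,d,b,y,z)) ` ({0..<P} \<times> {1..<P} \<times> Fun0 P S \<times> Z01 U)"
  let ?B = "\<lambda>gd. {t \<in> ?T. cQ P (fst gd) (snd gd) S (fst t) (snd t)}"
  let ?C0 = "(\<lambda>((g,d),(y,z)). (g,d,0::int,y,z)) ` (SIGMA gd:{0..<P}\<times>{0..<P}. ?B gd)"
  have eq: "Core S U = ?C1 \<union> ?C0"
  proof (rule set_eqI, rule iffI)
    fix c assume c: "c \<in> Core S U"
    obtain g d b y z where cc: "c = (g,d,b,y,z)" by (cases c) auto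
    show "c \<in> ?C1 \<union> ?C0"
    proof (cases "b = 0")
      case True
      hence "((g,d),(y,z)) \<in> (SIGMA gd:{0..<P}\<times>{0..<P}. ?B gd)" using c cc unfolding Core_def by auto
      hence "c \<in> ?C0" using cc True by (intro image_eqI[where x="((g,d),(y,z))"]) auto
      thus ?thesis by blast
    next
      case False
      hence "(d,b,y,z) \<in> {0..<P} \<times> {1..<P} \<times> Fun0 P S \<times> Z01 U" "g = 0" using c cc unfolding Core_def by auto
      hence "c \<in> ?C1" using cc by (intro image_eqI[where x="(d,b,y,z)"]) auto
      thus ?thesis by blast
    qed
  next
    fix c assume "c \<in> ?C1 \<union> ?C0"
    thus "c \<in> Core S U" unfolding Core_def using Z01_Fun0[OF P2, of U] P2 by auto
  qed
  have disj: "?C1 \<inter> ?C0 = {}" by auto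
  have fG: "finite ({0..<P}\<times>{0..<P})" by simp
  have fT: "finite ?T" using finite_Fun0 S fU P2 by simp
  have fB: "\<forall>gd\<in>{0..<P}\<times>{0..<P}. finite (?B gd)" using fT by simp
  have fC1: "finite ?C1" using finite_Fun0[OF S] fin_Z01[OF fU] P2 by simp
  have fC0: "finite ?C0" by (rule finite_imageI, rule finite_SigmaI[OF fG]) (use fT in simp)
  have c1: "card ?C1 = nat P * nat (P-1) * (nat P ^ card S * (card U + 1))"
  proof -
    have "inj_on (\<lambda>(d,b,y,z). (0::int,d,b,y,z)) ({0..<P} \<times> {1..<P} \<times> Fun0 P S \<times> Z01 U)"
      by (rule inj_onI) auto
    hence "card ?C1 = card ({0..<P} \<times> {1..<P} \<times> Fun0 P S \<times> Z01 U)" by (rule card_image)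
    thus ?thesis using card_Fun0'[OF S] card_Z01[OF fU] P2 by (simp add: card_cartesian_product)
  qed
  have c0: "card ?C0 = (\<Sum>gd\<in>{0..<P}\<times>{0..<P}. card (?B gd))"
  proof -
    have "inj_on (\<lambda>((g,d),(y,z)). (g,d,0::int,y,z)) (SIGMA gd:{0..<P}\<times>{0..<P}. ?B gd)"
      by (rule inj_onI) auto
    hence "card ?C0 = card (SIGMA gd:{0..<P}\<times>{0..<P}. ?B gd)" by (rule card_image)
    thus ?thesis using card_SigmaI[OF fG fB] by simp
  qed
  have "card (Core S U) = card ?C1 + card ?C0" unfolding eq by (rule card_Un_disjoint[OF fC1 fC0 disj])
  hence "int (card (Core S U)) = int (card ?C1) + int (\<Sum>gd\<in>{0..<P}\<times>{0..<P}. card (?B gd))" using c0 by simp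
  also have "int (card ?C1) = P * (P-1) * P ^ card S * (int (card U) + 1)"
    unfolding c1 using P2 by (simp add: of_nat_power algebra_simps)
  finally show ?thesis using Q0sum[OF S US] by simp
qed

end

context pr begin

lemma cGT:
  assumes D0: "finite D0" and kD: "k \<in> D0" and lD: "l \<in> D0" and kl: "k \<noteq> l"
    and S: "finite S" and lS: "l \<notin> S" and US: "U \<subseteq> S"
  shows "card {(x,y,z). x \<in> Fun0 P D0 \<and> y \<in> Fun0 P (insert l S) \<and> z \<in> Fun0 P U \<and> CC P k l S U x y z}
     = card (Fun0 P (D0 - {k,l})) * card (Core S U)"
proof -
  let ?GT = "{(x,y,z). x \<in> Fun0 P D0 \<and> y \<in> Fun0 P (insert l S) \<and> z \<in> Fun0 P U \<and> CC P k l S U x y z}"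
  let ?N = "Fun0 P (D0 - {k,l})"
  define \<Psi> where "\<Psi> = (\<lambda>(xr::nat\<Rightarrow>int,(g::int,d::int,b::int,y::nat\<Rightarrow>int,z::nat\<Rightarrow>int)). (xr(k:=g, l:=d), y(l:=b), z))"
  have inj: "inj_on \<Psi> (?N \<times> Core S U)"
  proof (rule inj_onI)
    fix u v assume u: "u \<in> ?N \<times> Core S U" and v: "v \<in> ?N \<times> Core S U" and e: "\<Psi> u = \<Psi> v"
    obtain xr g d b y z where uu: "u = (xr,(g,d,b,y,z))" by (cases u) auto
    obtain xr' g' d' b' y' z' where vv: "v = (xr',(g',d',b',y',z'))" by (cases v) auto
    have e1: "xr(k:=g, l:=d) = xr'(k:=g', l:=d')" and e2: "y(l:=b) = y'(l:=b')" and e3: "z = z'"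
      using e uu vv unfolding \<Psi>_def by auto
    have gg: "g = g'" using fun_cong[OF e1, of k] kl by simp
    have dd: "d = d'" using fun_cong[OF e1, of l] by simp
    have bb: "b = b'" using fun_cong[OF e2, of l] by simp
    have xx: "xr = xr'"
    proof
      fix t show "xr t = xr' t"
      proof (cases "t = k \<or> t = l")
        case True
        hence "xr t = 0" "xr' t = 0" using u v uu vv Fun0_out[of xr P "D0 - {k,l}" t] Fun0_out[of xr' P "D0 - {k,l}" t] by auto
        thus ?thesis by simp
      next
        case False thus ?thesis using fun_cong[OF e1, of t] by simp
      qed
    qed
    have yy: "y = y'"
    proof
      fix t show "y t = y' t"
      proof (cases "t = l")
        case True
        have "y \<in> Fun0 P S" "y' \<in> Fun0 P S" using u v uu vv unfolding Core_def by auto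
        hence "y t = 0" "y' t = 0" using True lS Fun0_out by metis+
        thus ?thesis by simp
      next
        case False thus ?thesis using fun_cong[OF e2, of t] by simp
      qed
    qed
    show "u = v" using uu vv gg dd bb xx yy e3 by simp
  qed
  have im: "\<Psi> ` (?N \<times> Core S U) = ?GT"
  proof (rule set_eqI, rule iffI)
    fix w assume "w \<in> \<Psi> ` (?N \<times> Core S U)"
    then obtain xr g d b y z where h: "xr \<in> ?N" "(g,d,b,y,z) \<in> Core S U" "w = \<Psi> (xr,(g,d,b,y,z))" by auto
    have r: "g \<in> {0..<P}" "d \<in> {0..<P}" "b \<in> {0..<P}" "y \<in> Fun0 P S" "z \<in> Fun0 P U"
      and c: "(b \<noteq> 0 \<and> g = 0 \<and> z \<in> Z01 U) \<or> (b = 0 \<and> cQ P g d S y z)"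
      using h(2) unfolding Core_def by auto
    have x: "xr(k:=g, l:=d) \<in> Fun0 P D0" using h(1) r kD lD unfolding Fun0_def by auto
    have y: "y(l:=b) \<in> Fun0 P (insert l S)" using r unfolding Fun0_def by auto
    have cq: "cQ P g d S (y(l:=b)) z = cQ P g d S y z" by (rule cQ_cong) (use lS in auto)
    have "CC P k l S U (xr(k:=g, l:=d)) (y(l:=b)) z" unfolding CC_def using c cq kl by auto
    thus "w \<in> ?GT" using h(3) x y r unfolding \<Psi>_def by auto
  next
    fix w assume "w \<in> ?GT"
    then obtain x y z where w: "w = (x,y,z)" "x \<in> Fun0 P D0" "y \<in> Fun0 P (insert l S)" "z \<in> Fun0 P U" "CC P k l S U x y z"
      by auto
    let ?xr = "x(k:=0, l:=0)"
    let ?yr = "y(l:=0)"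
    have xr: "?xr \<in> ?N" using w(2) unfolding Fun0_def by auto
    have yr: "?yr \<in> Fun0 P S" using w(3) unfolding Fun0_def by auto
    have rx: "x k \<in> {0..<P}" "x l \<in> {0..<P}" "y l \<in> {0..<P}" using w(2,3) kD lD unfolding Fun0_def by auto
    have cq: "cQ P (x k) (x l) S ?yr z = cQ P (x k) (x l) S y z" by (rule cQ_cong) (use lS in auto)
    have "(x k, x l, y l, ?yr, z) \<in> Core S U" unfolding Core_def using rx yr w(4) w(5) cq unfolding CC_def by auto
    moreover have "w = \<Psi> (?xr, (x k, x l, y l, ?yr, z))" unfolding \<Psi>_def using w(1) kl by auto
    ultimately show "w \<in> \<Psi> ` (?N \<times> Core S U)" using xr by blast
  qed
  have "card ?GT = card (?N \<times> Core S U)" using card_image[OF inj] im by simp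
  thus ?thesis by (simp add: card_cartesian_product)
qed

end

locale mat = pr +
  fixes n k l :: nat and x y z :: "nat \<Rightarrow> int"
  assumes n4: "4 \<le> n" and k1: "1 \<le> k" and kl: "k < l" and ln: "l < n - 1"
    and x: "x \<in> Fun0 P {1..<n-1}" and y: "y \<in> Fun0 P {Suc k..<n-1}" and z: "z \<in> Fun0 P {Suc l..<n-1}"
begin

definition ee :: "nat \<Rightarrow> nat" where "ee r = (if r = 0 \<or> r = k \<or> r = l then 2 else 1)"
definition par :: "nat \<Rightarrow> nat \<Rightarrow> int" where
  "par r s = (if r = 0 then x s else if r = k then y s else if r = l then z s else 0)"
definition M :: "nat \<Rightarrow> nat \<Rightarrow> int" where
  "M r s = (if r < n \<and> s < n then (if s = n-1 then 1 else if r = s then P^(ee r) else if r < s then P * par r s else 0) else 0)"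

definition NR where "NR = {1..<n-1} - {k,l}"
definition SS where "SS = {Suc k..<n-1} - {l}"
definition UU where "UU = {Suc l..<n-1}"

lemma rowsum:
  assumes r: "r < n - 1"
  shows "(\<Sum>t<n. c t * M r t) = c (n-1) + P^(ee r) * c r + P * (\<Sum>t\<in>{Suc r..<n-1}. par r t * c t)"
proof -
  have n: "n = Suc (n-1)" using n4 by simp
  have "(\<Sum>t<n. c t * M r t) = (\<Sum>t<n-1. c t * M r t) + c (n-1) * M r (n-1)"
    by (subst n) (simp add: lessThan_Suc)
  also have "c (n-1) * M r (n-1) = c (n-1)" using r unfolding M_def by simp
  also have "{..<n-1} = {..<r} \<union> ({r} \<union> {Suc r..<n-1})" using r by auto
  also have "(\<Sum>t\<in>{..<r} \<union> ({r} \<union> {Suc r..<n-1}). c t * M r t)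
      = (\<Sum>t\<in>{..<r}. c t * M r t) + (c r * M r r + (\<Sum>t\<in>{Suc r..<n-1}. c t * M r t))"
    by (subst sum.union_disjoint; auto)+
  also have "(\<Sum>t\<in>{..<r}. c t * M r t) = 0" by (rule sum.neutral) (auto simp: M_def)
  also have "c r * M r r = P^(ee r) * c r" using r unfolding M_def by simp
  also have "(\<Sum>t\<in>{Suc r..<n-1}. c t * M r t) = P * (\<Sum>t\<in>{Suc r..<n-1}. par r t * c t)"
    unfolding sum_distrib_left by (rule sum.cong) (auto simp: M_def)
  finally show ?thesis by simp
qed

lemma rowlast: "(\<Sum>t<n. c t * M (n-1) t) = c (n-1)"
proof -
  have n: "n = Suc (n-1)" using n4 by simp
  have "(\<Sum>t<n. c t * M (n-1) t) = (\<Sum>t<n-1. c t * M (n-1) t) + c (n-1) * M (n-1) (n-1)"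
    by (subst n) (simp add: lessThan_Suc)
  also have "(\<Sum>t<n-1. c t * M (n-1) t) = 0" by (rule sum.neutral) (auto simp: M_def)
  finally show ?thesis using n4 by (simp add: M_def)
qed

end

context mat begin

definition F3 where "F3 w = w l - (\<Sum>t\<in>UU. z t * w t)"
definition F2 where "F2 w = P*(w k - (\<Sum>t\<in>SS. y t * w t)) - y l * F3 w"
definition F0 where "F0 w = P^2*(w 0 - (\<Sum>t\<in>NR. x t * w t)) - x k * F2 w - P * x l * F3 w"
definition inspan where "inspan w \<longleftrightarrow> (\<exists>c. \<forall>r<n. w r = (\<Sum>t<n. c t * M r t))"

lemma sets:
  shows "{Suc l..<n-1} = UU" "{Suc k..<n-1} = insert l SS" "l \<notin> SS"
    "{Suc 0..<n-1} = insert k (insert l NR)" "k \<notin> insert l NR" "l \<notin> NR"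
    "UU \<subseteq> NR" "SS \<subseteq> NR" "finite NR" "finite SS" "finite UU"
  using k1 kl ln unfolding UU_def SS_def NR_def by auto

lemma ee_NR: "r \<in> NR \<Longrightarrow> ee r = 1" unfolding ee_def NR_def by auto
lemma par_NR: "r \<in> NR \<Longrightarrow> par r t = 0" unfolding par_def NR_def by auto
lemma NR_lt: "r \<in> NR \<Longrightarrow> r < n - 1" unfolding NR_def by auto
lemma ee_0: "ee 0 = 2" and ee_k: "ee k = 2" and ee_l: "ee l = 2" unfolding ee_def by auto
lemma par_0: "par 0 t = x t" and par_k: "par k t = y t" and par_l: "par l t = z t"
  unfolding par_def using k1 kl by auto

lemma rows_cases: "r < n - 1 \<Longrightarrow> r = 0 \<or> r = k \<or> r = l \<or> r \<in> NR"
  unfolding NR_def by auto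

lemma row0: "(\<Sum>t<n. c t * M 0 t) = c (n-1) + P^2 * c 0 + P * (x k * c k + x l * c l + (\<Sum>t\<in>NR. x t * c t))"
proof -
  have "(\<Sum>t\<in>{Suc 0..<n-1}. par 0 t * c t) = x k * c k + x l * c l + (\<Sum>t\<in>NR. x t * c t)"
    unfolding sets(4) using sets(5,6,9) by (simp add: par_0)
  thus ?thesis using rowsum[of 0 c] ln ee_0 by simp
qed

lemma rowk: "(\<Sum>t<n. c t * M k t) = c (n-1) + P^2 * c k + P * (y l * c l + (\<Sum>t\<in>SS. y t * c t))"
proof -
  have "(\<Sum>t\<in>{Suc k..<n-1}. par k t * c t) = y l * c l + (\<Sum>t\<in>SS. y t * c t)"
    unfolding sets(2) using sets(3,10) by (simp add: par_k)
  thus ?thesis using rowsum[of k c] kl ln ee_k by simp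
qed

lemma rowl: "(\<Sum>t<n. c t * M l t) = c (n-1) + P^2 * c l + P * (\<Sum>t\<in>UU. z t * c t)"
  using rowsum[of l c] ln ee_l sets(1) by (simp add: par_l)

lemma rowNR: "r \<in> NR \<Longrightarrow> (\<Sum>t<n. c t * M r t) = c (n-1) + P * c r"
  using rowsum[of r c] NR_lt ee_NR par_NR by simp

lemma sumP: "(\<And>t. t \<in> D \<Longrightarrow> w t = P * c t) \<Longrightarrow> (\<Sum>t\<in>D. f t * w t) = P * (\<Sum>t\<in>D. f t * c t)"
  unfolding sum_distrib_left by (rule sum.cong) auto

lemma span_iff:
  assumes w1: "w (n-1) = 0"
  shows "inspan w \<longleftrightarrow> (\<forall>r\<in>NR. P dvd w r) \<and> P^2 dvd F3 w \<and> P^3 dvd F2 w \<and> P^4 dvd F0 w"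
proof
  assume "inspan w"
  then obtain c where c: "\<And>r. r < n \<Longrightarrow> w r = (\<Sum>t<n. c t * M r t)" unfolding inspan_def by blast
  have cl: "c (n-1) = 0" using c[of "n-1"] rowlast w1 n4 by simp
  have cNR: "w t = P * c t" if "t \<in> NR" for t using c[of t] rowNR[OF that] cl NR_lt[OF that] by simp
  have sU: "(\<Sum>t\<in>UU. z t * w t) = P * (\<Sum>t\<in>UU. z t * c t)" by (rule sumP[OF cNR]) (use sets(7) in blast)
  have sS: "(\<Sum>t\<in>SS. y t * w t) = P * (\<Sum>t\<in>SS. y t * c t)" by (rule sumP[OF cNR]) (use sets(8) in blast)
  have sN: "(\<Sum>t\<in>NR. x t * w t) = P * (\<Sum>t\<in>NR. x t * c t)" by (rule sumP[OF cNR])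
  have wl: "w l = P^2 * c l + P * (\<Sum>t\<in>UU. z t * c t)" using c[of l] rowl cl ln by simp
  have wk: "w k = P^2 * c k + P * (y l * c l + (\<Sum>t\<in>SS. y t * c t))" using c[of k] rowk cl kl ln by simp
  have w0: "w 0 = P^2 * c 0 + P * (x k * c k + x l * c l + (\<Sum>t\<in>NR. x t * c t))" using c[of 0] row0 cl n4 by simp
  have f3: "F3 w = P^2 * c l" unfolding F3_def wl sU by simp
  have f2: "F2 w = P^3 * c k" unfolding F2_def f3 wk sS by (simp add: algebra_simps power2_eq_square power3_eq_cube)
  have f0: "F0 w = P^4 * c 0" unfolding F0_def f3 f2 w0 sN
    by (simp add: algebra_simps power2_eq_square power3_eq_cube power4_eq_xxxx)
  show "(\<forall>r\<in>NR. P dvd w r) \<and> P^2 dvd F3 w \<and> P^3 dvd F2 w \<and> P^4 dvd F0 w"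
    using cNR f3 f2 f0 by simp
next
  assume h: "(\<forall>r\<in>NR. P dvd w r) \<and> P^2 dvd F3 w \<and> P^3 dvd F2 w \<and> P^4 dvd F0 w"
  define c where "c t = (if t \<in> NR then w t div P else if t = l then F3 w div P^2
     else if t = k then F2 w div P^3 else if t = 0 then F0 w div P^4 else 0)" for t
  have P0: "P \<noteq> 0" using P2 by simp
  have cNR: "w t = P * c t" if "t \<in> NR" for t using that h unfolding c_def by simp
  have cn: "c (n-1) = 0" unfolding c_def NR_def using kl ln k1 by auto
  have cl: "F3 w = P^2 * c l" using h sets(6) unfolding c_def by simp
  have ck: "F2 w = P^3 * c k" using h sets(5) kl unfolding c_def by simp
  have c0: "F0 w = P^4 * c 0" using h k1 kl unfolding c_def NR_def by simp
  have sU: "(\<Sum>t\<in>UU. z t * w t) = P * (\<Sum>t\<in>UU. z t * c t)" by (rule sumP[OF cNR]) (use sets(7) in blast)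
  have sS: "(\<Sum>t\<in>SS. y t * w t) = P * (\<Sum>t\<in>SS. y t * c t)" by (rule sumP[OF cNR]) (use sets(8) in blast)
  have sN: "(\<Sum>t\<in>NR. x t * w t) = P * (\<Sum>t\<in>NR. x t * c t)" by (rule sumP[OF cNR])
  have "w r = (\<Sum>t<n. c t * M r t)" if r: "r < n" for r
  proof (cases "r = n - 1")
    case True thus ?thesis using rowlast cn w1 by simp
  next
    case False
    hence r1: "r < n - 1" using r by simp
    show ?thesis
    proof (cases "r \<in> NR")
      case True thus ?thesis using rowNR cn cNR by simp
    next
      case rN: False
      show ?thesis
      proof (cases "r = l")
        case True
        have "w l = P^2 * c l + P * (\<Sum>t\<in>UU. z t * c t)" using cl sU unfolding F3_def by simp
        thus ?thesis using True rowl cn by simp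
      next
        case nl: False
        show ?thesis
        proof (cases "r = k")
          case True
          have "P * w k = P * (P^2 * c k + P * (y l * c l + (\<Sum>t\<in>SS. y t * c t)))"
            using ck cl sS unfolding F2_def by (simp add: algebra_simps power2_eq_square power3_eq_cube)
          hence "w k = P^2 * c k + P * (y l * c l + (\<Sum>t\<in>SS. y t * c t))" using P0 by simp
          thus ?thesis using True rowk cn by simp
        next
          case nk: False
          hence r0: "r = 0" using rows_cases[OF r1] rN nl by blast
          have "P^2 * w 0 = P^2 * (P^2 * c 0 + P * (x k * c k + x l * c l + (\<Sum>t\<in>NR. x t * c t)))"
            using c0 ck cl sN unfolding F0_def
            by (simp add: algebra_simps power2_eq_square power3_eq_cube power4_eq_xxxx)
          hence "w 0 = P^2 * c 0 + P * (x k * c k + x l * c l + (\<Sum>t\<in>NR. x t * c t))" using P0 by simp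
          thus ?thesis using r0 row0 cn by simp
        qed
      qed
    qed
  qed
  thus "inspan w" unfolding inspan_def by blast
qed

end

context mat begin

definition Xp where "Xp i = (if i = 0 then P else x i)"
definition Yp where "Yp i = (if i = k then P else if k < i then y i else 0)"
definition Zp where "Zp i = (if i = l then P else if l < i then z i else 0)"

definition wij where "wij i j = (\<lambda>r. M r i * M r j)"
definition f3 where "f3 i j = Zp i * Zp j - (if i = j \<and> i \<in> UU then z i else 0)"
definition h2 where "h2 i j = Yp i * Yp j - (if i = j \<and> i \<in> SS then y i else 0)"
definition h0 where "h0 i j = Xp i * Xp j - (if i = j \<and> i \<in> NR then x i else 0)"

lemma M0: "i < n - 1 \<Longrightarrow> M 0 i = P * Xp i"
  unfolding M_def Xp_def par_def ee_def by (auto simp: power2_eq_square)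
lemma Mk: "i < n - 1 \<Longrightarrow> M k i = P * Yp i"
  using kl ln k1 unfolding M_def Yp_def par_def ee_def by (auto simp: power2_eq_square)
lemma Ml: "i < n - 1 \<Longrightarrow> M l i = P * Zp i"
  using kl ln k1 unfolding M_def Zp_def par_def ee_def by (auto simp: power2_eq_square)
lemma MNR: "r \<in> NR \<Longrightarrow> i < n - 1 \<Longrightarrow> M r i = (if i = r then P else 0)"
  using NR_lt[of r] ee_NR[of r] par_NR[of r] unfolding M_def by auto
lemma Mlast: "i < n - 1 \<Longrightarrow> M (n-1) i = 0"
  unfolding M_def by auto

lemma w_last: "i < n - 1 \<Longrightarrow> j < n - 1 \<Longrightarrow> wij i j (n-1) = 0"
  unfolding wij_def using Mlast by simp

lemma w_NR: "r \<in> NR \<Longrightarrow> i < n - 1 \<Longrightarrow> j < n - 1 \<Longrightarrow> wij i j r = (if i = r \<and> j = r then P*P else 0)"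
  unfolding wij_def using MNR by simp

lemma w_sum:
  assumes D: "D \<subseteq> NR" and i: "i < n - 1" and j: "j < n - 1"
  shows "(\<Sum>t\<in>D. f t * wij i j t) = (if i = j \<and> i \<in> D then f i * (P*P) else 0)"
proof -
  have fD: "finite D" using finite_subset[OF D sets(9)] .
  have "(\<Sum>t\<in>D. f t * wij i j t) = (\<Sum>t\<in>D. if t = i then (if i = j then f i * (P*P) else 0) else 0)"
    by (rule sum.cong[OF refl]) (use D w_NR i j in auto)
  also have "\<dots> = (if i = j \<and> i \<in> D then f i * (P*P) else 0)"
    using fD by (simp add: sum.delta)
  finally show ?thesis .
qed

lemma F3v: "i < n - 1 \<Longrightarrow> j < n - 1 \<Longrightarrow> F3 (wij i j) = P^2 * f3 i j"
  unfolding F3_def f3_def using w_sum[OF sets(7)] Ml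
  by (cases "i = j") (simp_all add: wij_def algebra_simps power2_eq_square)

lemma F2v: "i < n - 1 \<Longrightarrow> j < n - 1 \<Longrightarrow> F2 (wij i j) = P^3 * h2 i j - P^2 * (y l * f3 i j)"
  unfolding F2_def h2_def using w_sum[OF sets(8)] Mk F3v
  by (cases "i = j") (simp_all add: wij_def algebra_simps power2_eq_square power3_eq_cube)

lemma F0v: "i < n - 1 \<Longrightarrow> j < n - 1 \<Longrightarrow> F0 (wij i j) = P^4 * h0 i j - x k * F2 (wij i j) - P^3 * (x l * f3 i j)"
  unfolding F0_def h0_def using w_sum[of NR] M0 F3v
  by (cases "i = j") (simp_all add: wij_def algebra_simps power2_eq_square power3_eq_cube power4_eq_xxxx)

end

context mat begin

definition cnd where "cnd i j \<longleftrightarrow> P dvd y l * f3 i j \<and> P dvd x k * (h2 i j - (y l * f3 i j) div P) + x l * f3 i j"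

lemma P0: "P \<noteq> 0" using P2 by simp

lemma cancelP: "(P^m * P) dvd (P^m * a) \<longleftrightarrow> P dvd a"
  using P0 by simp

lemma inspan_wij:
  assumes i: "i < n - 1" and j: "j < n - 1"
  shows "inspan (wij i j) \<longleftrightarrow> cnd i j"
proof -
  have nr: "\<forall>r\<in>NR. P dvd wij i j r" using w_NR i j by simp
  have a: "P^2 dvd F3 (wij i j)" using F3v[OF i j] by simp
  have F2e: "F2 (wij i j) = P^2 * (P * h2 i j - y l * f3 i j)" using F2v[OF i j] by (simp add: algebra_simps power2_eq_square power3_eq_cube)
  have b: "P^3 dvd F2 (wij i j) \<longleftrightarrow> P dvd y l * f3 i j"
  proof -
    have "P^3 dvd F2 (wij i j) \<longleftrightarrow> (P^2 * P) dvd (P^2 * (P * h2 i j - y l * f3 i j))"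
      unfolding F2e by (simp add: power3_eq_cube power2_eq_square)
    also have "\<dots> \<longleftrightarrow> P dvd (P * h2 i j - y l * f3 i j)" by (rule cancelP)
    also have "\<dots> \<longleftrightarrow> P dvd y l * f3 i j" by (simp add: dvd_diff_commute dvd_diff_right_iff)
    finally show ?thesis .
  qed
  have c: "P^4 dvd F0 (wij i j) \<longleftrightarrow> P dvd x k * (h2 i j - (y l * f3 i j) div P) + x l * f3 i j"
    if q: "P dvd y l * f3 i j"
  proof -
    define qq where "qq = (y l * f3 i j) div P"
    have qe: "y l * f3 i j = P * qq" using q unfolding qq_def by simp
    have "F0 (wij i j) = P^3 * (P * h0 i j - (x k * (h2 i j - qq) + x l * f3 i j))"
      unfolding F0v[OF i j] F2v[OF i j] qe by (simp add: algebra_simps power2_eq_square power3_eq_cube power4_eq_xxxx)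
    hence "P^4 dvd F0 (wij i j) \<longleftrightarrow> (P^3 * P) dvd (P^3 * (P * h0 i j - (x k * (h2 i j - qq) + x l * f3 i j)))"
      by (simp add: power4_eq_xxxx power3_eq_cube)
    also have "\<dots> \<longleftrightarrow> P dvd (P * h0 i j - (x k * (h2 i j - qq) + x l * f3 i j))" by (rule cancelP)
    also have "\<dots> \<longleftrightarrow> P dvd x k * (h2 i j - qq) + x l * f3 i j" by (simp add: dvd_diff_right_iff)
    finally show ?thesis unfolding qq_def .
  qed
  have sp: "inspan (wij i j) \<longleftrightarrow> (\<forall>r\<in>NR. P dvd wij i j r) \<and> P^2 dvd F3 (wij i j) \<and> P^3 dvd F2 (wij i j) \<and> P^4 dvd F0 (wij i j)"
    by (rule span_iff[of "wij i j"]) (rule w_last[OF i j])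
  show ?thesis unfolding sp cnd_def using nr a b c by blast
qed

lemma Mcol_last: "r < n \<Longrightarrow> M r (n-1) = 1"
  unfolding M_def using n4 by simp
lemma Mcol_last': "r < n \<Longrightarrow> M r (n - Suc 0) = 1"
  using Mcol_last by simp

lemma inspan_col: "m < n \<Longrightarrow> inspan (\<lambda>r. M r m)"
proof -
  assume m: "m < n"
  have "M r m = (\<Sum>t<n. (if t = m then 1 else 0) * M r t)" for r
  proof -
    have "(\<Sum>t<n. (if t = m then 1 else 0) * M r t) = (\<Sum>t<n. if t = m then M r t else 0)"
      by (rule sum.cong) auto
    also have "\<dots> = M r m" using m by (simp add: sum.delta)
    finally show ?thesis by simp
  qed
  thus ?thesis unfolding inspan_def by (intro exI[where x="\<lambda>t. if t = m then 1 else 0"]) auto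
qed

lemma inspan_ext: "inspan w \<Longrightarrow> (\<And>r. r < n \<Longrightarrow> w' r = w r) \<Longrightarrow> inspan w'"
  unfolding inspan_def by metis

lemma inspan_last:
  assumes i: "i < n" and j: "j < n" and ij: "i = n - 1 \<or> j = n - 1"
  shows "inspan (wij i j)"
proof (cases "j = n - 1")
  case True
  show ?thesis
    by (rule inspan_ext[OF inspan_col[OF i]]) (simp add: wij_def True Mcol_last')
next
  case False
  hence "i = n - 1" using ij by simp
  show ?thesis
    by (rule inspan_ext[OF inspan_col[OF j]]) (simp add: wij_def \<open>i = n - 1\<close> Mcol_last')
qed

lemma closure_iff:
  "(\<forall>i<n. \<forall>j<n. \<exists>c. \<forall>r<n. M r i * M r j = (\<Sum>t<n. c t * M r t)) \<longleftrightarrow> (\<forall>i<n-1. \<forall>j<n-1. cnd i j)"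
proof -
  have "(\<exists>c. \<forall>r<n. M r i * M r j = (\<Sum>t<n. c t * M r t)) \<longleftrightarrow> inspan (wij i j)" for i j
    unfolding inspan_def wij_def by simp
  moreover have "inspan (wij i j)" if "i < n" "j < n" "\<not> (i < n - 1 \<and> j < n - 1)" for i j
    using inspan_last[of i j] that by linarith
  moreover have "inspan (wij i j) \<longleftrightarrow> cnd i j" if "i < n - 1" "j < n - 1" for i j
    using inspan_wij that by blast
  ultimately show ?thesis
  proof -
    assume e: "\<And>i j. (\<exists>c. \<forall>r<n. M r i * M r j = (\<Sum>t<n. c t * M r t)) \<longleftrightarrow> inspan (wij i j)"
      and t: "\<And>i j. i < n \<Longrightarrow> j < n \<Longrightarrow> \<not> (i < n - 1 \<and> j < n - 1) \<Longrightarrow> inspan (wij i j)"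
      and c: "\<And>i j. i < n - 1 \<Longrightarrow> j < n - 1 \<Longrightarrow> inspan (wij i j) \<longleftrightarrow> cnd i j"
    show ?thesis
    proof
      assume h: "\<forall>i<n. \<forall>j<n. \<exists>c. \<forall>r<n. M r i * M r j = (\<Sum>t<n. c t * M r t)"
      show "\<forall>i<n-1. \<forall>j<n-1. cnd i j"
      proof (intro allI impI)
        fix i j assume ij: "i < n - 1" "j < n - 1"
        hence "i < n" "j < n" by auto
        hence "inspan (wij i j)" using h e by blast
        thus "cnd i j" using c ij by blast
      qed
    next
      assume h: "\<forall>i<n-1. \<forall>j<n-1. cnd i j"
      show "\<forall>i<n. \<forall>j<n. \<exists>c. \<forall>r<n. M r i * M r j = (\<Sum>t<n. c t * M r t)"
      proof (intro allI impI)
        fix i j assume ij: "i < n" "j < n"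
        have "inspan (wij i j)"
        proof (cases "i < n - 1 \<and> j < n - 1")
          case True thus ?thesis using h c by blast
        next
          case False thus ?thesis using t ij by blast
        qed
        thus "\<exists>c. \<forall>r<n. M r i * M r j = (\<Sum>t<n. c t * M r t)" using e by blast
      qed
    qed
  qed
qed

end

context mat begin

lemma zUU: "z \<in> Fun0 P UU" using z unfolding UU_def .
lemma z_out: "i \<notin> UU \<Longrightarrow> z i = 0" using Fun0_out[OF zUU] by blast
lemma y_out: "\<not> k < i \<Longrightarrow> y i = 0" using Fun0_out[OF y] by auto
lemma yl_r: "0 \<le> y l \<and> y l < P" using Fun0_range[OF y] kl ln by auto
lemma xk_r: "0 \<le> x k \<and> x k < P" using Fun0_range[OF x] kl ln k1 by auto
lemma l_UU: "l \<notin> UU" and l_SS: "l \<notin> SS" and k_UU: "k \<notin> UU" and k_SS: "k \<notin> SS"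
  unfolding UU_def SS_def using kl by auto
lemma UU_SS: "UU \<subseteq> SS" unfolding UU_def SS_def using kl by auto
lemma SS_gt: "i \<in> SS \<Longrightarrow> k < i \<and> i \<noteq> l \<and> i < n - 1" unfolding SS_def by auto
lemma UU_gt: "i \<in> UU \<Longrightarrow> l < i \<and> i < n - 1" unfolding UU_def by auto

lemma Zp_lt: "i < l \<Longrightarrow> Zp i = 0" unfolding Zp_def by auto
lemma Zp_gt: "l < i \<Longrightarrow> Zp i = z i" unfolding Zp_def by auto
lemma Zp_SS: "i \<in> SS \<Longrightarrow> Zp i = z i"
  using SS_gt[of i] z_out[of i] Zp_lt Zp_gt unfolding UU_def
  by (metis atLeastLessThan_iff linorder_neqE_nat not_less_eq_eq Suc_le_eq)
lemma Zp_l: "Zp l = P" unfolding Zp_def by simp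
lemma Yp_lt: "i < k \<Longrightarrow> Yp i = 0" unfolding Yp_def by auto
lemma Yp_gt: "k < i \<Longrightarrow> Yp i = y i" unfolding Yp_def by auto
lemma Yp_k: "Yp k = P" unfolding Yp_def by simp

lemma cnd_sym: "cnd i j = cnd j i"
proof (cases "i = j")
  case False
  thus ?thesis unfolding cnd_def f3_def h2_def by (simp add: mult.commute)
qed simp

lemma cnd_fwd:
  assumes A: "\<forall>i<n-1. \<forall>j<n-1. cnd i j"
  shows "CC P k l SS UU x y z"
proof -
  have cll: "cnd l l" using A ln by blast
  have f3ll: "f3 l l = P*P" unfolding f3_def using l_UU Zp_l by simp
  have h2ll: "h2 l l = y l * y l" unfolding h2_def using l_SS Yp_gt[of l] kl by simp
  have q: "(y l * (P*P)) div P = y l * P" using P0 by simp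
  have "P dvd x k * (y l * y l - y l * P) + x l * (P*P)" using cll unfolding cnd_def f3ll h2ll q by simp
  hence "P dvd x k * (y l * y l)"
    by (rule dlin[OF _ dvd_refl, of _ _ 1 "x k * y l - x l * P"]) (simp add: algebra_simps)
  hence xkyl: "P dvd x k \<or> P dvd y l" using pm by auto
  show ?thesis
  proof (cases "y l = 0")
    case False
    have "\<not> P dvd y l" using dz yl_r False by blast
    hence "P dvd x k" using xkyl by blast
    hence xk: "x k = 0" using dz xk_r by blast
    have "z \<in> Z01 UU"
    proof (rule Z01_char[OF zUU], intro ballI)
      fix i j assume ij: "i \<in> UU" "j \<in> UU"
      have "cnd i j" using A UU_gt ij by blast
      hence "P dvd y l * f3 i j" unfolding cnd_def by blast
      hence "P dvd f3 i j" using pm \<open>\<not> P dvd y l\<close> by blast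
      moreover have "f3 i j = z i * z j - (if i = j then z i else 0)"
        unfolding f3_def using ij UU_gt Zp_gt by auto
      ultimately show "P dvd z i * z j - (if i = j then z i else 0)" by simp
    qed
    thus ?thesis unfolding CC_def using False xk by simp
  next
    case True
    have "cQ P (x k) (x l) SS y z" unfolding cQ_def
    proof (intro ballI)
      fix i j assume ij: "i \<in> SS" "j \<in> SS"
      have "cnd i j" using A SS_gt ij by blast
      moreover have "f3 i j = z i * z j - (if i = j then z i else 0)"
        unfolding f3_def using ij Zp_SS z_out by auto
      moreover have "h2 i j = y i * y j - (if i = j then y i else 0)"
        unfolding h2_def using ij SS_gt Yp_gt by auto
      ultimately show "P dvd x k * (y i * y j - (if i = j then y i else 0)) + x l * (z i * z j - (if i = j then z i else 0))"
        unfolding cnd_def using True by simp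
    qed
    thus ?thesis unfolding CC_def using True by simp
  qed
qed

end

context mat begin

lemma cnd_le:
  assumes C: "CC P k l SS UU x y z" and ij: "i \<le> j" and j: "j < n - 1"
  shows "cnd i j"
proof -
  have Cc: "(y l \<noteq> 0 \<and> x k = 0 \<and> z \<in> Z01 UU) \<or> (y l = 0 \<and> cQ P (x k) (x l) SS y z)"
    using C unfolding CC_def .
  have cQij: "P dvd x k * (y i * y j - (if i = j then y i else 0)) + x l * (z i * z j - (if i = j then z i else 0))"
    if "y l = 0" "cQ P (x k) (x l) SS y z" "i \<in> SS" "j \<in> SS" for i j
    using that unfolding cQ_def by blast
  consider "i < k" | "i = k" | "k < i \<and> i < l" | "i = l" | "l < i" by linarith
  thus ?thesis
  proof cases
    case 1
    have "\<not> (i \<in> UU)" using 1 kl UU_gt[of i] by auto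
    hence "f3 i j = 0" unfolding f3_def using 1 kl Zp_lt[of i] by auto
    moreover have "\<not> (i \<in> SS)" using 1 SS_gt[of i] by auto
    hence "h2 i j = 0" unfolding h2_def using 1 Yp_lt[of i] by auto
    ultimately show ?thesis unfolding cnd_def by simp
  next
    case 2
    have "f3 i j = 0" unfolding f3_def using 2 kl Zp_lt k_UU by auto
    moreover have "h2 i j = P * Yp j" unfolding h2_def using 2 Yp_k k_SS by auto
    ultimately show ?thesis unfolding cnd_def by simp
  next
    case 3
    have iS: "i \<in> SS" unfolding SS_def using 3 j ij by auto
    have "\<not> (i \<in> UU)" using 3 UU_gt[of i] by auto
    hence f: "f3 i j = 0" unfolding f3_def using 3 Zp_lt[of i] by auto
    have h: "h2 i j = y i * y j - (if i = j then y i else 0)" unfolding h2_def using 3 ij iS Yp_gt by auto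
    have "P dvd x k * (y i * y j - (if i = j then y i else 0))"
    proof (cases "y l = 0")
      case False thus ?thesis using Cc by simp
    next
      case True
      hence cq: "cQ P (x k) (x l) SS y z" using Cc by blast
      show ?thesis
      proof (cases "j = l")
        case True thus ?thesis using \<open>y l = 0\<close> 3 by simp
      next
        case False
        hence jS: "j \<in> SS" unfolding SS_def using 3 ij j by auto
        have "z i = 0" using z_out[of i] \<open>\<not> (i \<in> UU)\<close> by simp
        thus ?thesis using cQij[OF \<open>y l = 0\<close> cq iS jS] by (cases "i = j") simp_all
      qed
    qed
    thus ?thesis unfolding cnd_def f h by simp
  next
    case 4
    have f: "f3 i j = P * Zp j" unfolding f3_def using 4 Zp_l l_UU by simp
    have h: "h2 i j = y l * y j" unfolding h2_def using 4 l_SS Yp_gt kl ij by auto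
    have q: "y l * f3 i j div P = y l * Zp j" unfolding f using P0 by (simp add: algebra_simps)
    have "P dvd x k * (y l * y j - y l * Zp j)"
    proof (cases "y l = 0")
      case False thus ?thesis using Cc by simp
    qed simp
    hence "P dvd x k * (y l * y j - y l * Zp j) + x l * (P * Zp j)" by simp
    thus ?thesis unfolding cnd_def q h f using P0 by simp
  next
    case 5
    have iU: "i \<in> UU" "j \<in> UU" unfolding UU_def using 5 ij j by auto
    hence iS: "i \<in> SS" "j \<in> SS" using UU_SS by auto
    have f: "f3 i j = z i * z j - (if i = j then z i else 0)" unfolding f3_def using 5 ij Zp_gt iU by auto
    have h: "h2 i j = y i * y j - (if i = j then y i else 0)" unfolding h2_def using iS SS_gt Yp_gt by auto
    show ?thesis
    proof (cases "y l = 0")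
      case False
      hence xk: "x k = 0" and zz: "z \<in> Z01 UU" using Cc by auto
      have "f3 i j = 0" unfolding f using Z01_prod[OF zz] by simp
      thus ?thesis unfolding cnd_def using xk by simp
    next
      case True
      hence cq: "cQ P (x k) (x l) SS y z" using Cc by blast
      show ?thesis unfolding cnd_def f h using cQij[OF True cq iS] True by simp
    qed
  qed
qed

lemma cnd_iff: "(\<forall>i<n-1. \<forall>j<n-1. cnd i j) \<longleftrightarrow> CC P k l SS UU x y z"
proof
  assume "\<forall>i<n-1. \<forall>j<n-1. cnd i j" thus "CC P k l SS UU x y z" by (rule cnd_fwd)
next
  assume C: "CC P k l SS UU x y z"
  show "\<forall>i<n-1. \<forall>j<n-1. cnd i j"
  proof (intro allI impI)
    fix i j assume "i < n - 1" "j < n - 1"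
    show "cnd i j"
    proof (cases "i \<le> j")
      case True thus ?thesis using cnd_le[OF C] \<open>j < n - 1\<close> by blast
    next
      case False thus ?thesis using cnd_le[OF C, of j i] \<open>i < n - 1\<close> cnd_sym by simp
    qed
  qed
qed

end

definition Mg :: "int \<Rightarrow> nat \<Rightarrow> nat \<Rightarrow> nat \<Rightarrow> (nat \<Rightarrow> int) \<Rightarrow> (nat \<Rightarrow> int) \<Rightarrow> (nat \<Rightarrow> int) \<Rightarrow> nat \<Rightarrow> nat \<Rightarrow> int" where
  "Mg P n k l x y z r s = (if r < n \<and> s < n then (if s = n-1 then 1 else if r = s then P^(if r = 0 \<or> r = k \<or> r = l then 2 else 1)
     else if r < s then P * (if r = 0 then x s else if r = k then y s else if r = l then z s else 0) else 0) else 0)"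

lemma (in mat) M_eq: "M = Mg P n k l x y z"
  by (intro ext) (simp add: M_def Mg_def ee_def par_def)

lemma (in mat) closure_CC:
  "(\<forall>i<n. \<forall>j<n. \<exists>c. \<forall>r<n. Mg P n k l x y z r i * Mg P n k l x y z r j = (\<Sum>t<n. c t * Mg P n k l x y z r t))
    \<longleftrightarrow> CC P k l SS UU x y z"
  using closure_iff cnd_iff unfolding M_eq by simp

lemma alpha_len: "length (alpha_comp n k l) = n - 1"
  unfolding alpha_comp_def by simp

lemma alpha_nth: "r < n - 1 \<Longrightarrow> alpha_comp n k l ! r = (if r = 0 \<or> r = k \<or> r = l then 2 else 1)"
  unfolding alpha_comp_def by simp

lemma matset:
  fixes n k l p :: nat
  assumes n4: "4 \<le> n" and k1: "1 \<le> k" and kl: "k < l" and ln: "l < n - 1" and pp: "prime p"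
  shows "irreducible_subring_matrices p (alpha_comp n k l) = (\<lambda>(x,y,z). Mg (int p) n k l x y z) `
      {(x,y,z). x \<in> Fun0 (int p) {1..<n-1} \<and> y \<in> Fun0 (int p) {Suc k..<n-1} \<and> z \<in> Fun0 (int p) {Suc l..<n-1}
         \<and> CC (int p) k l ({Suc k..<n-1} - {l}) {Suc l..<n-1} x y z}"
    (is "?L = ?f ` ?G")
proof -
  let ?P = "int p"
  let ?e = "alpha_comp n k l"
  have prP: "pr ?P" unfolding pr_def using pp by (simp add: prime_nat_int_transfer)
  have len: "length ?e + 1 = n" using alpha_len[of n k l] n4 by simp
  have enth: "\<And>r. r < n - 1 \<Longrightarrow> ?e ! r = (if r = 0 \<or> r = k \<or> r = l then 2 else 1)" by (rule alpha_nth)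
  have P2: "?P \<ge> 2" using pr.P2[OF prP] .
  have L: "?L = {A. (\<forall>r s. (n \<le> r \<or> n \<le> s) \<longrightarrow> A r s = 0)
       \<and> (\<forall>r<n. \<forall>s<r. A r s = 0)
       \<and> (\<forall>r<n - 1. A r r = ?P ^ (?e ! r))
       \<and> A (n - 1) (n - 1) = 1
       \<and> (\<forall>r<n. A r (n - 1) = 1)
       \<and> (\<forall>r s. r < s \<and> s < n - 1 \<longrightarrow>
             (\<exists>a::int. A r s = ?P * a) \<and> 0 \<le> A r s \<and> A r s < ?P ^ (?e ! r))
       \<and> (\<forall>i<n. \<forall>j<n. \<exists>c :: nat \<Rightarrow> int.
             \<forall>r<n. A r i * A r j = (\<Sum>t<n. c t * A r t))}"
    unfolding irreducible_subring_matrices_def Let_def len ..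
  show ?thesis
  proof (rule set_eqI, rule iffI)
    fix A assume "A \<in> ?L"
    hence A: "\<And>r s. (n \<le> r \<or> n \<le> s) \<Longrightarrow> A r s = 0"
       "\<And>r s. r < n \<Longrightarrow> s < r \<Longrightarrow> A r s = 0"
       "\<And>r. r < n - 1 \<Longrightarrow> A r r = ?P ^ (?e ! r)"
       "A (n - 1) (n - 1) = 1"
       "\<And>r. r < n \<Longrightarrow> A r (n - 1) = 1"
       "\<And>r s. r < s \<Longrightarrow> s < n - 1 \<Longrightarrow> (\<exists>a::int. A r s = ?P * a) \<and> 0 \<le> A r s \<and> A r s < ?P ^ (?e ! r)"
       and Acl: "\<forall>i<n. \<forall>j<n. \<exists>c :: nat \<Rightarrow> int. \<forall>r<n. A r i * A r j = (\<Sum>t<n. c t * A r t)"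
      unfolding L by auto
    define x where "x s = (if s \<in> {1..<n-1} then A 0 s div ?P else 0)" for s
    define y where "y s = (if s \<in> {Suc k..<n-1} then A k s div ?P else 0)" for s
    define z where "z s = (if s \<in> {Suc l..<n-1} then A l s div ?P else 0)" for s
    have divr: "A r s = ?P * (A r s div ?P) \<and> 0 \<le> A r s div ?P \<and> A r s div ?P < ?P"
      if rs1: "r < s" and rs2: "s < n - 1" and rs3: "r = 0 \<or> r = k \<or> r = l" for r s
    proof -
      have "r < n - 1" using rs1 rs2 by simp
      obtain a where a: "A r s = ?P * a" "0 \<le> A r s" "A r s < ?P ^ 2"
        using A(6)[OF rs1 rs2] enth[OF \<open>r < n - 1\<close>] rs3 by auto
      have "a = A r s div ?P" using a(1) P2 by simp
      moreover have "0 \<le> a" using a P2 by (simp add: zero_le_mult_iff)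
      moreover have "a < ?P" using a P2 by (simp add: power2_eq_square)
      ultimately show ?thesis using a(1) by simp
    qed
    have xF: "x \<in> Fun0 ?P {1..<n-1}" unfolding Fun0_def x_def using divr by auto
    have yF: "y \<in> Fun0 ?P {Suc k..<n-1}" unfolding Fun0_def y_def using divr by auto
    have zF: "z \<in> Fun0 ?P {Suc l..<n-1}" unfolding Fun0_def z_def using divr by auto
    interpret mat ?P n k l x y z
      using prP n4 k1 kl ln xF yF zF unfolding mat_def mat_axioms_def by blast
    have AM: "A = Mg ?P n k l x y z"
    proof (intro ext)
      fix r s
      show "A r s = Mg ?P n k l x y z r s"
      proof (cases "r < n \<and> s < n")
        case False thus ?thesis using A(1)[of r s] unfolding Mg_def by auto
      next
        case rs: True
        show ?thesis
        proof (cases "s = n - 1")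
          case True thus ?thesis using A(5) rs unfolding Mg_def by simp
        next
          case sn: False
          show ?thesis
          proof (cases "r = s")
            case True thus ?thesis using A(3)[of r] enth[of r] rs sn unfolding Mg_def by auto
          next
            case rns: False
            show ?thesis
            proof (cases "r < s")
              case False thus ?thesis using A(2)[of r s] rs rns unfolding Mg_def by auto
            next
              case True
              have s1: "s < n - 1" using rs sn by linarith
              show ?thesis
              proof (cases "r = 0 \<or> r = k \<or> r = l")
                case True
                have "A r s = ?P * (A r s div ?P)" using divr[OF \<open>r < s\<close> s1 True] by blast
                thus ?thesis using True \<open>r < s\<close> s1 rs sn rns kl k1 unfolding Mg_def x_def y_def z_def by auto
              next
                case False
                have h: "(\<exists>a::int. A r s = ?P * a) \<and> 0 \<le> A r s \<and> A r s < ?P"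
                  using A(6)[OF \<open>r < s\<close> s1] enth[of r] False \<open>r < s\<close> s1 by auto
                hence "A r s = 0" using dz[of "A r s"] by auto
                thus ?thesis using False \<open>r < s\<close> s1 rs sn rns unfolding Mg_def by auto
              qed
            qed
          qed
        qed
      qed
    qed
    have "CC ?P k l SS UU x y z" using closure_CC Acl unfolding AM[symmetric] by blast
    hence "(x,y,z) \<in> ?G" using xF yF zF unfolding SS_def UU_def by auto
    thus "A \<in> ?f ` ?G" using AM by (intro image_eqI[where x="(x,y,z)"]) auto
  next
    fix A assume "A \<in> ?f ` ?G"
    then obtain x y z where g: "A = Mg ?P n k l x y z" "x \<in> Fun0 ?P {1..<n-1}" "y \<in> Fun0 ?P {Suc k..<n-1}"
      "z \<in> Fun0 ?P {Suc l..<n-1}" "CC ?P k l ({Suc k..<n-1} - {l}) {Suc l..<n-1} x y z" by auto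
    interpret mat ?P n k l x y z
      using prP n4 k1 kl ln g(2-4) unfolding mat_def mat_axioms_def by blast
    have cl: "\<forall>i<n. \<forall>j<n. \<exists>c :: nat \<Rightarrow> int. \<forall>r<n. A r i * A r j = (\<Sum>t<n. c t * A r t)"
      using closure_CC g(1,5) unfolding SS_def UU_def by simp
    have rng: "0 \<le> v \<and> v < ?P" if "v = (if r = 0 then x s else if r = k then y s else if r = l then z s else 0)"
      "r < s" "s < n - 1" for r s v
    proof -
      have "0 \<le> x s \<and> x s < ?P" using Fun0_range[OF g(2)] that by auto
      moreover have "r = k \<Longrightarrow> 0 \<le> y s \<and> y s < ?P" using Fun0_range[OF g(3)] that by auto
      moreover have "r = l \<Longrightarrow> 0 \<le> z s \<and> z s < ?P" using Fun0_range[OF g(4)] that by auto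
      ultimately show ?thesis using that(1) P2 by auto
    qed
    have p6: "(\<exists>a::int. A r s = ?P * a) \<and> 0 \<le> A r s \<and> A r s < ?P ^ (?e ! r)" if rs: "r < s" "s < n - 1" for r s
    proof -
      define v where "v = (if r = 0 then x s else if r = k then y s else if r = l then z s else 0)"
      have Av: "A r s = ?P * v" using rs unfolding g(1) Mg_def v_def by auto
      have vr: "0 \<le> v \<and> v < ?P" using rng[OF v_def rs] .
      have er: "?e ! r = (if r = 0 \<or> r = k \<or> r = l then 2 else 1)" using enth rs by simp
      have "A r s < ?P ^ (?e ! r)"
      proof (cases "r = 0 \<or> r = k \<or> r = l")
        case True
        thus ?thesis using Av vr er P2 by (simp add: power2_eq_square)
      next
        case False
        hence "v = 0" unfolding v_def by auto
        thus ?thesis using Av er False P2 by simp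
      qed
      thus ?thesis using Av vr P2 by simp
    qed
    have c1: "\<forall>r s. (n \<le> r \<or> n \<le> s) \<longrightarrow> A r s = 0" unfolding g(1) Mg_def by auto
    have c2: "\<forall>r<n. \<forall>s<r. A r s = 0" unfolding g(1) Mg_def by auto
    have c3: "\<forall>r<n - 1. A r r = ?P ^ (?e ! r)" unfolding g(1) Mg_def using enth by auto
    have c4: "A (n - 1) (n - 1) = 1" unfolding g(1) Mg_def using n4 by simp
    have c5: "\<forall>r<n. A r (n - 1) = 1" unfolding g(1) Mg_def by simp
    have c6: "\<forall>r s. r < s \<and> s < n - 1 \<longrightarrow> (\<exists>a::int. A r s = ?P * a) \<and> 0 \<le> A r s \<and> A r s < ?P ^ (?e ! r)"
      using p6 by blast
    show "A \<in> ?L" unfolding L using c1 c2 c3 c4 c5 c6 cl by (intro CollectI conjI)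
  qed
qed

lemma Mg_0: "0 < s \<Longrightarrow> s < n - 1 \<Longrightarrow> Mg P n k l x y z 0 s = P * x s"
proof -
  assume h: "0 < s" "s < n - 1"
  hence "s < n" "0 < n" "s \<noteq> n - 1" by arith+
  thus ?thesis using h unfolding Mg_def by simp
qed
lemma Mg_k: "0 < k \<Longrightarrow> k < s \<Longrightarrow> s < n - 1 \<Longrightarrow> Mg P n k l x y z k s = P * y s"
proof -
  assume h: "0 < k" "k < s" "s < n - 1"
  hence "s < n" "k < n" "s \<noteq> n - 1" by arith+
  thus ?thesis using h unfolding Mg_def by simp
qed
lemma Mg_l: "0 < k \<Longrightarrow> k < l \<Longrightarrow> l < s \<Longrightarrow> s < n - 1 \<Longrightarrow> Mg P n k l x y z l s = P * z s"
proof -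
  assume h: "0 < k" "k < l" "l < s" "s < n - 1"
  hence "s < n" "l < n" "s \<noteq> n - 1" by arith+
  thus ?thesis using h unfolding Mg_def by simp
qed

theorem lemma4p8:
  fixes n k l p :: nat
  assumes "n \<ge> 4" and "1 \<le> k" and "k < l" and "l \<le> n - 2" and "prime p"
  shows "int (g_count (alpha_comp n k l) p) =
      int p ^ (3*n - k - l - 9)
    + int (n - l - 1) * (int p - 1) * (int p + 1) * int p ^ (2*n - k - 7)
    + int (n - k - 1) * (int p - 1) * int p ^ (2*n - l - 6)
    - int (n - l - 1) * int p ^ (n - 4) * (int p - 1)
    + int (n - k - 2) * int (n - l - 1) * (int p - 1)^2 * int p ^ (n - 4)
    + (int (n - l - 2) + int ((n - l - 2) choose 2)) * (int p - 1) * (int p - 2) * (int p - 3) * int p ^ (n - 4)"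
proof -
  note n4 = assms(1) and k1 = assms(2) and kl = assms(3) and ln2 = assms(4) and pp = assms(5)
  have ln: "l < n - 1" using ln2 n4 by simp
  let ?P = "int p"
  have prP: "pr ?P" unfolding pr_def using pp by (simp add: prime_nat_int_transfer)
  have P2: "?P \<ge> 2" using pr.P2[OF prP] .
  let ?G = "{(x,y,z). x \<in> Fun0 ?P {1..<n-1} \<and> y \<in> Fun0 ?P {Suc k..<n-1} \<and> z \<in> Fun0 ?P {Suc l..<n-1}
         \<and> CC ?P k l ({Suc k..<n-1} - {l}) {Suc l..<n-1} x y z}"
  let ?S = "{Suc k..<n-1} - {l}"
  let ?U = "{Suc l..<n-1}"
  have inj: "inj_on (\<lambda>(x,y,z). Mg ?P n k l x y z) ?G"
  proof (rule inj_onI)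
    fix a b assume a: "a \<in> ?G" and b: "b \<in> ?G" and e: "(\<lambda>(x,y,z). Mg ?P n k l x y z) a = (\<lambda>(x,y,z). Mg ?P n k l x y z) b"
    obtain x y z where aa: "a = (x,y,z)" by (cases a) auto
    obtain x' y' z' where bb: "b = (x',y',z')" by (cases b) auto
    have F: "x \<in> Fun0 ?P {1..<n-1}" "y \<in> Fun0 ?P {Suc k..<n-1}" "z \<in> Fun0 ?P {Suc l..<n-1}"
      "x' \<in> Fun0 ?P {1..<n-1}" "y' \<in> Fun0 ?P {Suc k..<n-1}" "z' \<in> Fun0 ?P {Suc l..<n-1}"
      using a b aa bb by auto
    have E: "Mg ?P n k l x y z r s = Mg ?P n k l x' y' z' r s" for r s using e aa bb by simp
    have P0: "?P \<noteq> 0" using P2 by simp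
    have "x = x'"
    proof
      fix s show "x s = x' s"
      proof (cases "s \<in> {1..<n-1}")
        case True thus ?thesis using E[of 0 s] P0 Mg_0[of s n ?P k l] by auto
      next
        case False thus ?thesis using Fun0_out[OF F(1)] Fun0_out[OF F(4)] by metis
      qed
    qed
    moreover have "y = y'"
    proof
      fix s show "y s = y' s"
      proof (cases "s \<in> {Suc k..<n-1}")
        case True thus ?thesis using E[of k s] P0 k1 Mg_k[of k s n ?P l] by auto
      next
        case False thus ?thesis using Fun0_out[OF F(2)] Fun0_out[OF F(5)] by metis
      qed
    qed
    moreover have "z = z'"
    proof
      fix s show "z s = z' s"
      proof (cases "s \<in> {Suc l..<n-1}")
        case True thus ?thesis using E[of l s] P0 k1 kl Mg_l[of k l s n ?P] by auto
      next
        case False thus ?thesis using Fun0_out[OF F(3)] Fun0_out[OF F(6)] by metis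
      qed
    qed
    ultimately show "a = b" using aa bb by simp
  qed
  have c1: "g_count (alpha_comp n k l) p = card ?G"
    unfolding g_count_def matset[OF n4 k1 kl ln pp] using card_image[OF inj] .
  have ins: "insert l ?S = {Suc k..<n-1}" using kl ln by auto
  have c2: "card ?G = card (Fun0 ?P ({1..<n-1} - {k,l})) * card (pr.Core ?P ?S ?U)"
  proof -
    have US: "?U \<subseteq> ?S" using kl by auto
    have "finite {1..<n-1}" "k \<in> {1..<n-1}" "l \<in> {1..<n-1}" "k \<noteq> l" "finite ?S" "l \<notin> ?S"
      using k1 kl ln by auto
    from pr.cGT[OF prP this US] show ?thesis unfolding ins .
  qed
  have cNR: "card ({1..<n-1} - {k,l}) = n - 4"
  proof -
    have "card ({1..<n-1} - {k,l}) = card {1..<n-1} - card {k,l}"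
      by (rule card_Diff_subset) (use k1 kl ln in auto)
    thus ?thesis using kl by simp
  qed
  have cS: "card ?S = n - k - 3"
  proof -
    have "card ?S = card {Suc k..<n-1} - card {l}"
      by (rule card_Diff_subset) (use k1 kl ln in auto)
    thus ?thesis by simp
  qed
  have cU: "card ?U = n - l - 2" by simp
  have core: "int (card (pr.Core ?P ?S ?U)) = ?P * (?P-1) * ?P ^ (n-k-3) * (int (n-l-2) + 1) +
      (?P ^ (n-k-3) * ?P ^ (n-l-2) + (?P-1) * (int (n-k-3) + 1) * ?P ^ (n-l-2) + (?P-1) * ?P ^ (n-k-3) * (int (n-l-2) + 1)
      + (?P-1)^2 * (int (n-k-3) + 1) * (int (n-l-2) + 1)
      + (?P-1) * (?P ^ (n-l-2) - (int (n-l-2) + 1) + (int (n-l-2) + int ((n-l-2) choose 2)) * (?P-2) * (?P-3)))"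
  proof -
    have US: "?U \<subseteq> ?S" using kl by auto
    have fS: "finite ?S" by simp
    show ?thesis using pr.cCore[OF prP fS US] unfolding cS cU .
  qed
  have nr: "int (card (Fun0 ?P ({1..<n-1} - {k,l}))) = ?P ^ (n-4)"
    using card_Fun0'[of "{1..<n-1} - {k,l}" ?P] cNR P2 by simp
  define m where "m = n - 4"
  define s where "s = n - k - 3"
  define u where "u = n - l - 2"
  have e1: "3*n - k - l - 9 = m + s + u" unfolding m_def s_def u_def using n4 kl ln by simp
  have e2: "2*n - k - 7 = m + s" unfolding m_def s_def using n4 kl ln by simp
  have e3: "2*n - l - 6 = m + u" unfolding m_def u_def using n4 kl ln by simp
  have e4: "n - l - 1 = u + 1" "n - k - 1 = s + 2" "n - k - 2 = s + 1" "n - 4 = m" "n - l - 2 = u" "n - k - 3 = s"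
    unfolding m_def s_def u_def using n4 kl ln by auto
  have "int (g_count (alpha_comp n k l) p) = ?P ^ (n-4) * int (card (pr.Core ?P ?S ?U))"
    using c1 c2 nr by simp
  also have "\<dots> = ?P ^ m * (?P * (?P-1) * ?P ^ s * (int u + 1) +
      (?P ^ s * ?P ^ u + (?P-1) * (int s + 1) * ?P ^ u + (?P-1) * ?P ^ s * (int u + 1)
      + (?P-1)^2 * (int s + 1) * (int u + 1)
      + (?P-1) * (?P ^ u - (int u + 1) + (int u + int (u choose 2)) * (?P-2) * (?P-3))))"
    unfolding core e4 ..
  also have "\<dots> = ?P ^ (m + s + u)
    + int (u + 1) * (?P - 1) * (?P + 1) * ?P ^ (m + s)
    + int (s + 2) * (?P - 1) * ?P ^ (m + u)
    - int (u + 1) * ?P ^ m * (?P - 1)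
    + int (s + 1) * int (u + 1) * (?P - 1)^2 * ?P ^ m
    + (int u + int (u choose 2)) * (?P - 1) * (?P - 2) * (?P - 3) * ?P ^ m"
    by (simp add: power_add algebra_simps power2_eq_square)
  finally show ?thesis unfolding e1 e2 e3 e4 .
qed

end
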